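(* Let $f\in\mathcal{S}(\Omega)$ and let $x\in\Omega\setminus\mathbb{R}$. (1) If $f'_s(x)=0$, then one of the following holds: (a) $\mathbb{S}_x$ is included in $V(f)$, $V(f^c)$, $V(N(f))$ and $V(N(f^c))$; (b) $\mathbb{S}_x$ intersects neither $V(f)$ nor $V(f^c)$; moreover it intersects neither $V(N(f))$ nor $V(N(f^c))$, unless $A$ is singular and $f^\circ_s(x)$ (the constant value of $f$ on $\mathbb{S}_x$) or $f^\circ_s(x)^c$ is a nonzero element of norm $0$. (2) If $f'_s(x)$ is a right zero divisor, then one of the following holds: (a) $\mathbb{S}_x$ intersects $V(f)$ at at least one point $y$, and $\mathbb{S}_x\cap V(f)$ is the set of all $y'\in\mathbb{S}_x$ such that $(\mathrm{im}(y')-\mathrm{im}(y))f'_s(x)=0$. Moreover $y^c\notin V(f)$ and $y^c\in V(N(f^c))$. The equality $(f'_s(x),f'_s(x)^c,y)=0$ is equivalent to $\mathbb{S}_x\subseteq V(N(f^c))$ and to $y\in V(N(f))$; if it holds, then $\mathbb{S}_x\subseteq V(N(f))$ if, and only if, $[n(f'_s(x)),y]=0$; (b) $\mathbb{S}_x$ does not intersect $V(f)$. (3) If $f'_s(x)$ is neither $0$ nor a right zero divisor, then one of the following holds: (a) $\mathbb{S}_x$ intersects $V(f)$ at exactly one point $y$, and $y^c\in V(N(f^c))$. If $f'_s(x)$ is invertible, then $y=\mathrm{re}(x)-f^\circ_s(x)f'_s(x)^{-1}$. The equality $(f'_s(x),f'_s(x)^c,y)=0$ is equivalent to $\mathbb{S}_x\subseteq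 V(N(f^c))$ and to $y\in V(N(f))$; if it holds, then $\mathbb{S}_x\subseteq V(N(f))$ if, and only if, $[n(f'_s(x)),y]=0$. In particular, if $f'_s(x)\in C_A\setminus\{0\}$, then $\mathbb{S}_x$ is included both in $V(N(f))$ and in $V(N(f^c))$ and $\mathbb{S}_x\cap V(f^c)=\{f'_s(x)^{-1}y^cf'_s(x)\}$; (b) $\mathbb{S}_x$ does not intersect $V(f)$. If $f'_s(x)\in C_A\setminus\{0\}$, then $\mathbb{S}_x$ does not intersect $V(f^c)$ and it cannot be included both in $V(N(f))$ and in $V(N(f^c))$. If, moreover, $f^\circ_s(x)\in C_A\setminus\{0\}$ (or if $A$ is compatible), then $\mathbb{S}_x$ is included neither in $V(N(f))$ nor in $V(N(f^c))$. Finally, if $x\in\Omega\cap\mathbb{R}$, then either $x$ belongs to $V(f)$, $V(f^c)$, $V(N(f))$ and $V(N(f^c))$; or $x$ belongs to neither $V(f)$ nor $V(f^c)$, and it belongs to neither $V(N(f))$ nor $V(N(f^c))$ unless $A$ is singular and $f(x)$ or $f(x)^c$ is a nonzero element of norm $0$.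
   Context: Let $A$ be a finite-dimensional real algebra with unit $1$ ($\mathbb{R}$ identified with $\mathbb{R}1$) which is alternative (the associator $(x,y,z)=(xy)z-x(yz)$ is alternating), with a $^*$-involution $x\mapsto x^c$ (real linear, $(x^c)^c=x$, $(xy)^c=y^cx^c$, $r^c=r$ for $r\in\mathbb{R}$). Let $t(x)=x+x^c$, $n(x)=xx^c$; $A$ is singular if some nonzero $x$ has $n(x)=0$, and compatible if $t$ takes values in the nucleus $\{r:(r,a,b)=0\ \forall a,b\}$. The center is the set of $r$ in the nucleus with $ra=ar$ for all $a$; $C_A=\{0\}\cup\{a\in A: n(a),n(a^c)$ invertible elements of the center$\}$. A nonzero $a\in A$ is a right zero divisor if $ba=0$ for some nonzero $b\in A$. $[a,b]=ab-ba$. Let $\mathbb{S}_A=\{J\in A:t(J)=0,n(J)=1\}$ (assumed non-empty), $Q_A=\mathbb{R}\cup\{x\in A:t(x),n(x)\in\mathbb{R},\ 4n(x)>t(x)^2\}$; every $x\in Q_A$ is $\alpha+\beta J$ with $\alpha,\beta\in\mathbb{R}$, $J\in\mathbb{S}_A$, $x^c=\alpha-\beta J$, $\mathrm{re}(x)=t(x)/2$, $\mathrm{im}(x)=x-\mathrm{re}(x)$, and $\mathbb{S}_x=\{\alpha+\beta I:I\in\mathbb{S}_A\}$. Let $D\subseteq\mathbb{C}$ be non-empty and invariant under complex conjugation and $\Omega=\{\alpha+\beta J:\alpha+i\beta\in D,\ J\in\mathbb{S}_A\}$. Let $A_{\mathbb{C}}=\{a+\imath b:a,b\in A\}$ with product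 $(a+\imath b)(a'+\imath b')=aa'-bb'+\imath(ab'+ba')$, conjugation $\overline{a+\imath b}=a-\imath b$, involution $(a+\imath b)^c=a^c+\imath b^c$. A stem function is $F=F_1+\imath F_2:D\to A_{\mathbb{C}}$ with $F(\bar z)=\overline{F(z)}$; it induces the slice function $f=\mathcal{I}(F)$, $f(\alpha+\beta J)=F_1(\alpha+i\beta)+JF_2(\alpha+i\beta)$. $\mathcal{S}(\Omega)$ is the set of slice functions, with slice product $f\cdot g=\mathcal{I}(FG)$, conjugate $f^c=\mathcal{I}(F^c)$, $F^c(z)=F(z)^c$, and normal function $N(f)=f\cdot f^c$. $V(h)=\{x:h(x)=0\}$. Spherical value $f^\circ_s(x)=\frac12(f(x)+f(x^c))$ and spherical derivative $f'_s(x)=\frac12\mathrm{im}(x)^{-1}(f(x)-f(x^c))$ for $x\in\Omega\setminus\mathbb{R}$. *)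

theory Defs
  imports "HOL-Analysis.Analysis"
begin

class alt_star_algebra = real_vector + times + one +
  fixes invol :: "'a \<Rightarrow> 'a"
  assumes asa_distrib_left: "(a + b) * c = a * c + b * c"
    and asa_distrib_right: "a * (b + c) = a * b + a * c"
    and asa_scaleR_left: "(r *\<^sub>R a) * b = r *\<^sub>R (a * b)"
    and asa_scaleR_right: "a * (r *\<^sub>R b) = r *\<^sub>R (a * b)"
    and asa_one_left: "1 * a = a"
    and asa_one_right: "a * 1 = a"
    and asa_one_neq_zero: "(1::'a) \<noteq> 0"
    and asa_alt_xxy: "(x * x) * y - x * (x * y) = 0"
    and asa_alt_xyx: "(x * y) * x - x * (y * x) = 0"
    and asa_alt_yxx: "(y * x) * x - y * (x * x) = 0"
    and invol_add: "invol (a + b) = invol a + invol b"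
    and invol_scaleR: "invol (r *\<^sub>R a) = r *\<^sub>R invol a"
    and invol_invol: "invol (invol a) = a"
    and invol_mult: "invol (a * b) = invol b * invol a"
    and invol_real: "invol (r *\<^sub>R 1) = r *\<^sub>R 1"

text \<open>Finite-dimensionality is stated as a hypothesis of the theorem (it cannot be a class
  axiom because span needs the real_vector sort).\<close>
definition fin_dim :: "'a::alt_star_algebra itself \<Rightarrow> bool" where
  "fin_dim _ \<longleftrightarrow> (\<exists>B::'a set. finite B \<and> span B = UNIV)"

definition rl :: "real \<Rightarrow> 'a::alt_star_algebra" where
  "rl r = r *\<^sub>R 1"

definition reals :: "'a::alt_star_algebra set" where
  "reals = range rl"

definition assoc :: "'a::alt_star_algebra \<Rightarrow> 'a \<Rightarrow> 'a \<Rightarrow> 'a" where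
  "assoc x y z = (x * y) * z - x * (y * z)"

definition comm :: "'a::alt_star_algebra \<Rightarrow> 'a \<Rightarrow> 'a" where
  "comm a b = a * b - b * a"

definition trc :: "'a::alt_star_algebra \<Rightarrow> 'a" where
  "trc a = a + invol a"

definition nrm :: "'a::alt_star_algebra \<Rightarrow> 'a" where
  "nrm a = a * invol a"

definition nucleus :: "'a::alt_star_algebra set" where
  "nucleus = {r. \<forall>a b. assoc r a b = 0}"

definition center :: "'a::alt_star_algebra set" where
  "center = {r \<in> nucleus. \<forall>a. r * a = a * r}"

definition invertible :: "'a::alt_star_algebra \<Rightarrow> bool" where
  "invertible a \<longleftrightarrow> (\<exists>b. a * b = 1 \<and> b * a = 1)"

definition inv_el :: "'a::alt_star_algebra \<Rightarrow> 'a" where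
  "inv_el a = (THE b. a * b = 1 \<and> b * a = 1)"

definition CA :: "'a::alt_star_algebra set" where
  "CA = {0} \<union> {a. nrm a \<in> center \<and> invertible (nrm a) \<and>
                     nrm (invol a) \<in> center \<and> invertible (nrm (invol a))}"

definition singular :: "'a::alt_star_algebra itself \<Rightarrow> bool" where
  "singular _ \<longleftrightarrow> (\<exists>x::'a. x \<noteq> 0 \<and> nrm x = 0)"

definition compatible :: "'a::alt_star_algebra itself \<Rightarrow> bool" where
  "compatible _ \<longleftrightarrow> (\<forall>x::'a. trc x \<in> nucleus)"

definition right_zero_divisor :: "'a::alt_star_algebra \<Rightarrow> bool" where
  "right_zero_divisor a \<longleftrightarrow> a \<noteq> 0 \<and> (\<exists>b. b \<noteq> 0 \<and> b * a = 0)"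

definition nz_null :: "'a::alt_star_algebra \<Rightarrow> bool" where
  "nz_null a \<longleftrightarrow> a \<noteq> 0 \<and> nrm a = 0"

definition SA :: "'a::alt_star_algebra set" where
  "SA = {J. trc J = 0 \<and> nrm J = 1}"

definition re_el :: "'a::alt_star_algebra \<Rightarrow> 'a" where
  "re_el x = (1/2) *\<^sub>R trc x"

definition im_el :: "'a::alt_star_algebra \<Rightarrow> 'a" where
  "im_el x = x - re_el x"

definition sph :: "'a::alt_star_algebra \<Rightarrow> 'a set" where
  "sph x = {y. \<exists>\<alpha> \<beta> J I. J \<in> SA \<and> I \<in> SA \<and> x = rl \<alpha> + \<beta> *\<^sub>R J \<and> y = rl \<alpha> + \<beta> *\<^sub>R I}"

definition OmegaD :: "complex set \<Rightarrow> 'a::alt_star_algebra set" where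
  "OmegaD D = {rl \<alpha> + \<beta> *\<^sub>R J | \<alpha> \<beta> J. Complex \<alpha> \<beta> \<in> D \<and> J \<in> SA}"

section \<open>The complexification A_C, represented as pairs (a,b) = a + i b\<close>

definition cmul :: "'a::alt_star_algebra \<times> 'a \<Rightarrow> 'a \<times> 'a \<Rightarrow> 'a \<times> 'a" where
  "cmul p q = (fst p * fst q - snd p * snd q, fst p * snd q + snd p * fst q)"

definition cbar :: "'a::alt_star_algebra \<times> 'a \<Rightarrow> 'a \<times> 'a" where
  "cbar p = (fst p, - snd p)"

definition cinvol :: "'a::alt_star_algebra \<times> 'a \<Rightarrow> 'a \<times> 'a" where
  "cinvol p = (invol (fst p), invol (snd p))"

definition stem :: "complex set \<Rightarrow> (complex \<Rightarrow> 'a::alt_star_algebra \<times> 'a) \<Rightarrow> bool" where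
  "stem D F \<longleftrightarrow> (\<forall>z\<in>D. F (cnj z) = cbar (F z))"

definition sliceI :: "complex set \<Rightarrow> (complex \<Rightarrow> 'a::alt_star_algebra \<times> 'a) \<Rightarrow> 'a \<Rightarrow> 'a" where
  "sliceI D F x = (SOME v. \<exists>\<alpha> \<beta> J. J \<in> SA \<and> Complex \<alpha> \<beta> \<in> D \<and> x = rl \<alpha> + \<beta> *\<^sub>R J \<and>
       v = fst (F (Complex \<alpha> \<beta>)) + J * snd (F (Complex \<alpha> \<beta>)))"

definition stem_prod :: "(complex \<Rightarrow> 'a::alt_star_algebra \<times> 'a) \<Rightarrow> (complex \<Rightarrow> 'a \<times> 'a) \<Rightarrow> complex \<Rightarrow> 'a \<times> 'a" where
  "stem_prod F G = (\<lambda>z. cmul (F z) (G z))"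

definition stem_conj :: "(complex \<Rightarrow> 'a::alt_star_algebra \<times> 'a) \<Rightarrow> complex \<Rightarrow> 'a \<times> 'a" where
  "stem_conj F = (\<lambda>z. cinvol (F z))"

text \<open>f = I(F), f^c = I(F^c), N(f) = f . f^c = I(F F^c), N(f^c) = f^c . (f^c)^c = I(F^c F).\<close>
definition slice_f :: "complex set \<Rightarrow> (complex \<Rightarrow> 'a::alt_star_algebra \<times> 'a) \<Rightarrow> 'a \<Rightarrow> 'a" where
  "slice_f D F = sliceI D F"

definition slice_fc :: "complex set \<Rightarrow> (complex \<Rightarrow> 'a::alt_star_algebra \<times> 'a) \<Rightarrow> 'a \<Rightarrow> 'a" where
  "slice_fc D F = sliceI D (stem_conj F)"

definition slice_Nf :: "complex set \<Rightarrow> (complex \<Rightarrow> 'a::alt_star_algebra \<times> 'a) \<Rightarrow> 'a \<Rightarrow> 'a" where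
  "slice_Nf D F = sliceI D (stem_prod F (stem_conj F))"

definition slice_Nfc :: "complex set \<Rightarrow> (complex \<Rightarrow> 'a::alt_star_algebra \<times> 'a) \<Rightarrow> 'a \<Rightarrow> 'a" where
  "slice_Nfc D F = sliceI D (stem_prod (stem_conj F) (stem_conj (stem_conj F)))"

definition Vz :: "'a::alt_star_algebra set \<Rightarrow> ('a \<Rightarrow> 'a) \<Rightarrow> 'a set" where
  "Vz \<Omega> h = {x \<in> \<Omega>. h x = 0}"

definition sph_val :: "('a::alt_star_algebra \<Rightarrow> 'a) \<Rightarrow> 'a \<Rightarrow> 'a" where
  "sph_val f x = (1/2) *\<^sub>R (f x + f (invol x))"

definition sph_der :: "('a::alt_star_algebra \<Rightarrow> 'a) \<Rightarrow> 'a \<Rightarrow> 'a" where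
  "sph_der f x = (1/2) *\<^sub>R (inv_el (im_el x) * (f x - f (invol x)))"

end

theory Submission
  imports Defs
begin


lemma asa_mult_0_left[simp]: "(0::'a::alt_star_algebra) * a = 0"
proof -
  have "(0+0::'a) * a = 0 * a + 0 * a" by (rule asa_distrib_left)
  then show ?thesis by simp
qed
lemma asa_mult_0_right[simp]: "(a::'a::alt_star_algebra) * 0 = 0"
proof -
  have "a * (0+0::'a) = a * 0 + a * 0" by (rule asa_distrib_right)
  then show ?thesis by simp
qed
lemma asa_minus_left[simp]: "(- a::'a::alt_star_algebra) * b = - (a * b)"
proof -
  have "(a + - a) * b = a * b + (-a) * b" by (rule asa_distrib_left)
  then show ?thesis by (simp add: eq_neg_iff_add_eq_0 add.commute)
qed
lemma asa_minus_right[simp]: "(a::'a::alt_star_algebra) * (- b) = - (a * b)"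
proof -
  have "a * (b + - b) = a * b + a * (-b)" by (rule asa_distrib_right)
  then show ?thesis by (simp add: eq_neg_iff_add_eq_0 add.commute)
qed
lemma asa_diff_left: "((a::'a::alt_star_algebra) - b) * c = a * c - b * c"
  using asa_distrib_left[of a "-b" c] by simp
lemma asa_diff_right: "(a::'a::alt_star_algebra) * (b - c) = a * b - a * c"
  using asa_distrib_right[of a b "-c"] by simp

lemmas asa_ring = asa_distrib_left asa_distrib_right asa_diff_left asa_diff_right
  asa_scaleR_left asa_scaleR_right

lemma assoc_swap12: "assoc (x::'a::alt_star_algebra) y z + assoc y x z = 0"
proof -
  have "assoc (x+y) (x+y) z = 0" using asa_alt_xxy[of "x+y" z] by (simp add: assoc_def)
  moreover have "assoc x x z = 0" "assoc y y z = 0" using asa_alt_xxy by (simp_all add: assoc_def)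
  ultimately show ?thesis by (simp add: assoc_def asa_ring algebra_simps)
qed
lemma assoc_swap23: "assoc (x::'a::alt_star_algebra) y z + assoc x z y = 0"
proof -
  have "assoc x (y+z) (y+z) = 0" using asa_alt_yxx[of x "y+z"] by (simp add: assoc_def)
  moreover have "assoc x y y = 0" "assoc x z z = 0" using asa_alt_yxx by (simp_all add: assoc_def)
  ultimately show ?thesis by (simp add: assoc_def asa_ring algebra_simps)
qed

lemma rep_zero1: "a = 0 \<Longrightarrow> (a::'a::real_vector) = 0"
proof -
  assume h: "a = 0"
  have "a = (1::real) *\<^sub>R a" by (simp only: scaleR_left_distrib scaleR_one)
  with h have "(1::real) *\<^sub>R a = 0" by simp
  then show ?thesis by simp
qed
lemma rep_zero2: "a + a = 0 \<Longrightarrow> (a::'a::real_vector) = 0"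
proof -
  assume h: "a + a = 0"
  have "a + a = (1+1::real) *\<^sub>R a" by (simp only: scaleR_left_distrib scaleR_one)
  with h have "(1+1::real) *\<^sub>R a = 0" by simp
  then show ?thesis by simp
qed
lemma rep_zero3: "a + a + a = 0 \<Longrightarrow> (a::'a::real_vector) = 0"
proof -
  assume h: "a + a + a = 0"
  have "a + a + a = (1+1+1::real) *\<^sub>R a" by (simp only: scaleR_left_distrib scaleR_one)
  with h have "(1+1+1::real) *\<^sub>R a = 0" by simp
  then show ?thesis by simp
qed
lemma rep_zero4: "a + a + a + a = 0 \<Longrightarrow> (a::'a::real_vector) = 0"
proof -
  assume h: "a + a + a + a = 0"
  have "a + a + a + a = (1+1+1+1::real) *\<^sub>R a" by (simp only: scaleR_left_distrib scaleR_one)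
  with h have "(1+1+1+1::real) *\<^sub>R a = 0" by simp
  then show ?thesis by simp
qed
lemma rep_zero6: "a + a + a + a + a + a = 0 \<Longrightarrow> (a::'a::real_vector) = 0"
proof -
  assume h: "a + a + a + a + a + a = 0"
  have "a + a + a + a + a + a = (1+1+1+1+1+1::real) *\<^sub>R a" by (simp only: scaleR_left_distrib scaleR_one)
  with h have "(1+1+1+1+1+1::real) *\<^sub>R a = 0" by simp
  then show ?thesis by simp
qed
lemma rep_zero12: "a + a + a + a + a + a + a + a + a + a + a + a = 0 \<Longrightarrow> (a::'a::real_vector) = 0"
proof -
  assume h: "a + a + a + a + a + a + a + a + a + a + a + a = 0"
  have "a + a + a + a + a + a + a + a + a + a + a + a = (1+1+1+1+1+1+1+1+1+1+1+1::real) *\<^sub>R a" by (simp only: scaleR_left_distrib scaleR_one)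
  with h have "(1+1+1+1+1+1+1+1+1+1+1+1::real) *\<^sub>R a = 0" by simp
  then show ?thesis by simp
qed


lemma id_xyxy: "assoc (x::'a::alt_star_algebra) y (x*y) = 0"
proof -
  have g0: "((assoc y x x + assoc y x x) * y) = 0" by (simp add: assoc_swap12 assoc_swap23)
  have g1: "((assoc y y x + assoc y y x) * x) = 0" by (simp add: assoc_swap12 assoc_swap23)
  have g2: "(assoc (y * y) x x + assoc (y * y) x x) = 0" by (simp add: assoc_swap12 assoc_swap23)
  have g3: "(assoc x (y * x) y + assoc (y * x) x y) = 0" by (simp add: assoc_swap12 assoc_swap23)
  have g4: "(assoc x y (y * x) + assoc x (y * x) y) = 0" by (simp add: assoc_swap12 assoc_swap23)
  have g5: "(assoc y x (x * y) + assoc x y (x * y)) = 0" by (simp add: assoc_swap12 assoc_swap23)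
  have g6: "(assoc y x (y * x) + assoc x y (y * x)) = 0" by (simp add: assoc_swap12 assoc_swap23)
  have g7: "(assoc y x (y * x) + assoc y (y * x) x) = 0" by (simp add: assoc_swap12 assoc_swap23)
  have g8: "(assoc y y (x * x) + assoc y (x * x) y) = 0" by (simp add: assoc_swap12 assoc_swap23)
  have g9: "(assoc y y (x * x) + assoc y y (x * x)) = 0" by (simp add: assoc_swap12 assoc_swap23)
  have g10: "(y * (assoc x y x + assoc x x y)) = 0" by (simp add: assoc_swap12 assoc_swap23)
  have g11: "(y * (assoc y x x + assoc x y x)) = 0" by (simp add: assoc_swap12 assoc_swap23)
  have g12: "(y * (assoc y x x + assoc y x x)) = 0" by (simp add: assoc_swap12 assoc_swap23)
  have e: "(assoc x y (x*y)) + (assoc x y (x*y)) = ((assoc y y (x * x) + assoc y y (x * x)) + (assoc y y (x * x) + assoc y y (x * x)) + (assoc (y * y) x x + assoc (y * y) x x) + (assoc y x (y * x) + assoc x y (y * x)) + (assoc y x (y * x) + assoc x y (y * x)) + (assoc x (y * x) y + assoc (y * x) x y) + (assoc x (y * x) y + assoc (y * x) x y) + (assoc y x (x * y) + assoc x y (x * y)) + (assoc y x (x * y) + assoc x y (x * y)) + (y * (assoc y x x + assoc x y x)) + (y * (assoc y x x + assoc x y x))) - (((assoc y x x + assoc y x x) * y) + (assoc y y (x * x) + assoc y (x * x) y) + (assoc y y (x * x) + assoc y (x * x) y) + ((assoc y y x + assoc y y x) * x) + (assoc y x (y * x) + assoc y (y * x) x) + (assoc y x (y * x) + assoc y (y *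 x) x) + (assoc x y (y * x) + assoc x (y * x) y) + (assoc x y (y * x) + assoc x (y * x) y) + (y * (assoc y x x + assoc y x x)) + (y * (assoc y x x + assoc y x x)) + (y * (assoc x y x + assoc x x y)) + (y * (assoc x y x + assoc x x y)))" by (simp add: assoc_def asa_ring algebra_simps)
  have "(assoc x y (x*y)) + (assoc x y (x*y)) = 0" using e g0 g1 g2 g3 g4 g5 g6 g7 g8 g9 g10 g11 g12 by simp
  then have "assoc x y (x*y) = 0" by (rule rep_zero2)
  then show ?thesis by (simp add: assoc_def algebra_simps)
qed

lemma id_axxb: "(a*x)*(x*b) = (a*(x*x))*b - x * assoc a x (b::'a::alt_star_algebra)"
proof -
  have g0: "((assoc b x a + assoc b a x) * x) = 0" by (simp add: assoc_swap12 assoc_swap23)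
  have g1: "((assoc b x a + assoc x b a) * x) = 0" by (simp add: assoc_swap12 assoc_swap23)
  have g2: "((assoc x a x + assoc a x x) * b) = 0" by (simp add: assoc_swap12 assoc_swap23)
  have g3: "((assoc x b a + assoc x a b) * x) = 0" by (simp add: assoc_swap12 assoc_swap23)
  have g4: "((assoc x x a + assoc x a x) * b) = 0" by (simp add: assoc_swap12 assoc_swap23)
  have g5: "((assoc x x a + assoc x x a) * b) = 0" by (simp add: assoc_swap12 assoc_swap23)
  have g6: "(assoc (b * x) x a + assoc (b * x) a x) = 0" by (simp add: assoc_swap12 assoc_swap23)
  have g7: "(assoc (x * b) x a + assoc (x * b) a x) = 0" by (simp add: assoc_swap12 assoc_swap23)
  have g8: "(assoc (x * x) b a + assoc (x * x) a b) = 0" by (simp add: assoc_swap12 assoc_swap23)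
  have g9: "(assoc b (x * a) x + assoc (x * a) b x) = 0" by (simp add: assoc_swap12 assoc_swap23)
  have g10: "(assoc b (x * x) a + assoc (x * x) b a) = 0" by (simp add: assoc_swap12 assoc_swap23)
  have g11: "(assoc b (x * x) a + assoc b a (x * x)) = 0" by (simp add: assoc_swap12 assoc_swap23)
  have g12: "(assoc b x (a * x) + assoc b (a * x) x) = 0" by (simp add: assoc_swap12 assoc_swap23)
  have g13: "(assoc b x (a * x) + assoc x b (a * x)) = 0" by (simp add: assoc_swap12 assoc_swap23)
  have g14: "(assoc b x (x * a) + assoc b (x * a) x) = 0" by (simp add: assoc_swap12 assoc_swap23)
  have g15: "(assoc b x (x * a) + assoc x b (x * a)) = 0" by (simp add: assoc_swap12 assoc_swap23)
  have g16: "(assoc x (a * x) b + assoc (a * x) x b) = 0" by (simp add: assoc_swap12 assoc_swap23)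
  have g17: "(assoc x (b * a) x + assoc (b * a) x x) = 0" by (simp add: assoc_swap12 assoc_swap23)
  have g18: "(assoc x (b * x) a + assoc (b * x) x a) = 0" by (simp add: assoc_swap12 assoc_swap23)
  have g19: "(assoc x (b * x) a + assoc x a (b * x)) = 0" by (simp add: assoc_swap12 assoc_swap23)
  have g20: "(assoc x (x * a) b + assoc (x * a) x b) = 0" by (simp add: assoc_swap12 assoc_swap23)
  have g21: "(assoc x (x * b) a + assoc (x * b) x a) = 0" by (simp add: assoc_swap12 assoc_swap23)
  have g22: "(assoc x (x * b) a + assoc x a (x * b)) = 0" by (simp add: assoc_swap12 assoc_swap23)
  have g23: "(assoc x b (x * a) + assoc x (x * a) b) = 0" by (simp add: assoc_swap12 assoc_swap23)
  have g24: "(assoc x x (a * b) + assoc x (a * b) x) = 0" by (simp add: assoc_swap12 assoc_swap23)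
  have g25: "(assoc x x (a * b) + assoc x x (a * b)) = 0" by (simp add: assoc_swap12 assoc_swap23)
  have g26: "(assoc x x (b * a) + assoc x (b * a) x) = 0" by (simp add: assoc_swap12 assoc_swap23)
  have g27: "(assoc x x (b * a) + assoc x x (b * a)) = 0" by (simp add: assoc_swap12 assoc_swap23)
  have g28: "(b * (assoc x a x + assoc a x x)) = 0" by (simp add: assoc_swap12 assoc_swap23)
  have g29: "(b * (assoc x x a + assoc x a x)) = 0" by (simp add: assoc_swap12 assoc_swap23)
  have g30: "(b * (assoc x x a + assoc x x a)) = 0" by (simp add: assoc_swap12 assoc_swap23)
  have g31: "(x * (assoc b a x + assoc a b x)) = 0" by (simp add: assoc_swap12 assoc_swap23)
  have g32: "(x * (assoc b x a + assoc b a x)) = 0" by (simp add: assoc_swap12 assoc_swap23)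
  have g33: "(x * (assoc b x a + assoc x b a)) = 0" by (simp add: assoc_swap12 assoc_swap23)
  have g34: "(x * (assoc x b a + assoc x a b)) = 0" by (simp add: assoc_swap12 assoc_swap23)
  have e: "((a*x)*(x*b) - ((a*(x*x))*b - x * assoc a x b)) + ((a*x)*(x*b) - ((a*(x*x))*b - x * assoc a x b)) + ((a*x)*(x*b) - ((a*(x*x))*b - x * assoc a x b)) + ((a*x)*(x*b) - ((a*(x*x))*b - x * assoc a x b)) + ((a*x)*(x*b) - ((a*(x*x))*b - x * assoc a x b)) + ((a*x)*(x*b) - ((a*(x*x))*b - x * assoc a x b)) = ((assoc x (x * b) a + assoc x a (x * b)) + (assoc x (x * b) a + assoc x a (x * b)) + (assoc x (x * b) a + assoc x a (x * b)) + (assoc x (x * b) a + assoc x a (x * b)) + (assoc x (x * b) a + assoc x a (x * b)) + (assoc x (x * b) a + assoc x a (x * b)) + (assoc x (x * a) b + assoc (x * a) x b) + (assoc x (x * a) b + assoc (x * a) x b) + (assoc x (x * a) b + assoc (x * a) x b) + (assoc x (x * a) b + assoc (x * a) x b) + (assoc x (x * a) b + assoc (x * a) x b) + (assoc x (x * a) b + assoc (x * a) x b) + (assoc x x (a * b) + assoc x x (a * b)) + (assoc x x (a * b) + assoc x x (a * b)) + (assoc x x (a * b) + assoc x x (a * b)) + (assoc (x * b) x a + assoc (x * b) a x) + (assoc (x * b) x a + assoc (x * b) a x) + (assoc (x * b) x a + assoc (x * b) a x) + (assoc (x * b) x a + assoc (x * b) a x) + (assoc (x * b) x a + assoc (x *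 b) a x) + (assoc (x * b) x a + assoc (x * b) a x) + (assoc x x (b * a) + assoc x x (b * a)) + (assoc x x (b * a) + assoc x x (b * a)) + (assoc x x (b * a) + assoc x x (b * a)) + (assoc x x (b * a) + assoc x x (b * a)) + (assoc b (x * a) x + assoc (x * a) b x) + (assoc b (x * a) x + assoc (x * a) b x) + (assoc b (x * a) x + assoc (x * a) b x) + (assoc b (x * a) x + assoc (x * a) b x) + ((assoc x x a + assoc x x a) * b) + ((assoc x x a + assoc x x a) * b) + ((assoc x x a + assoc x x a) * b) + ((assoc x x a + assoc x x a) * b) + ((assoc x x a + assoc x x a) * b) + (assoc b x (a * x) + assoc x b (a * x)) + (assoc b x (a * x) + assoc x b (a * x)) + (assoc b x (a * x) + assoc x b (a * x)) + (assoc b x (a * x) + assoc x b (a * x)) + (assoc b x (a * x) + assoc x b (a * x)) + (assoc b x (a * x) + assoc x b (a * x)) + (assoc x (b * a) x + assoc (b * a) x x) + (assoc x (b * a) x + assoc (b * a) x x) + (assoc b (x * x) a + assoc b a (x * x)) + (assoc b (x * x) a + assoc b a (x * x)) + (assoc (x * x) b a + assoc (x * x) a b) + (assoc (x * x) b a + assoc (x * x) a b) + (b * (assoc x x a + assoc x x a)) + (x * (assoc b x a + assoc x b a)) + (x * (assoc b x a + assoc x b a)) + (assoc x (b * x) a + assoc x a (b * x)) + (assoc x (b * x) a + assoc x a (b * x)) + (assoc x (b * x) a + assoc x a (b * x)) + (assoc x (b * x) a + assoc x a (b * x)) + (assoc (b * x) x a + assoc (b * x) a x) + (assoc (b * x)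 x a + assoc (b * x) a x) + (assoc (b * x) x a + assoc (b * x) a x) + (assoc (b * x) x a + assoc (b * x) a x) + (assoc b x (x * a) + assoc x b (x * a)) + (assoc b x (x * a) + assoc x b (x * a)) + (assoc b x (x * a) + assoc x b (x * a)) + (assoc b x (x * a) + assoc x b (x * a)) + (assoc b x (x * a) + assoc x b (x * a)) + (assoc b x (x * a) + assoc x b (x * a)) + (assoc b x (x * a) + assoc x b (x * a)) + (assoc b x (x * a) + assoc x b (x * a)) + ((assoc x a x + assoc a x x) * b) + ((assoc x a x + assoc a x x) * b) + ((assoc x a x + assoc a x x) * b) + ((assoc x a x + assoc a x x) * b) + ((assoc x a x + assoc a x x) * b) + ((assoc x a x + assoc a x x) * b)) - ((assoc x (x * b) a + assoc (x * b) x a) + (assoc x (x * b) a + assoc (x * b) x a) + (assoc x (x * b) a + assoc (x * b) x a) + (assoc x (x * b) a + assoc (x * b) x a) + (assoc x (x * b) a + assoc (x * b) x a) + (assoc x (x * b) a + assoc (x * b) x a) + (assoc x b (x * a) + assoc x (x * a) b) + (assoc x b (x * a) + assoc x (x * a) b) + (assoc x b (x * a) + assoc x (x * a) b) + (assoc x b (x * a) + assoc x (x * a) b) + (assoc x b (x * a) + assoc x (x * a) b) + (assoc x b (x * a) + assoc x (x * a) b) + (assoc x b (x * a) + assoc x (x * a) b) + (assoc x b (x * a) + assoc x (x * a) b) + ((assoc x x a + assoc x a x) * b) + ((assoc x x a + assoc x a x) * b) + ((assoc x x a + assoc x a x) * b) + ((assoc x x a + assoc x a x) * b) + ((assoc x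 x a + assoc x a x) * b) + ((assoc x x a + assoc x a x) * b) + ((assoc x x a + assoc x a x) * b) + ((assoc x x a + assoc x a x) * b) + ((assoc x x a + assoc x a x) * b) + ((assoc x x a + assoc x a x) * b) + ((assoc x x a + assoc x a x) * b) + ((assoc x x a + assoc x a x) * b) + (assoc x (a * x) b + assoc (a * x) x b) + (assoc x (a * x) b + assoc (a * x) x b) + (assoc x (a * x) b + assoc (a * x) x b) + (assoc x (a * x) b + assoc (a * x) x b) + (assoc x (a * x) b + assoc (a * x) x b) + (assoc x (a * x) b + assoc (a * x) x b) + ((assoc x b a + assoc x a b) * x) + ((assoc x b a + assoc x a b) * x) + ((assoc x b a + assoc x a b) * x) + ((assoc x b a + assoc x a b) * x) + (assoc x x (b * a) + assoc x (b * a) x) + (assoc x x (b * a) + assoc x (b * a) x) + (assoc x x (b * a) + assoc x (b * a) x) + (assoc x x (b * a) + assoc x (b * a) x) + (assoc x x (b * a) + assoc x (b * a) x) + (assoc x x (b * a) + assoc x (b * a) x) + (assoc x x (b * a) + assoc x (b * a) x) + (assoc x x (b * a) + assoc x (b * a) x) + (assoc b x (x * a) + assoc b (x * a) x) + (assoc b x (x * a) + assoc b (x * a) x) + (assoc b x (x * a) + assoc b (x * a) x) + (assoc b x (x * a) + assoc b (x * a) x) + (assoc b x (x * a) + assoc b (x * a) x) + (assoc b x (x * a) + assoc b (x * a) x) + (assoc b x (x * a) + assoc b (x * a) x) + (assoc b x (x * a) + assoc b (x * a) x) + (assoc x x (a * b) + assoc x (a * b) x) + (assoc x x (a * b) + assoc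 x (a * b) x) + (assoc x x (a * b) + assoc x (a * b) x) + (assoc x x (a * b) + assoc x (a * b) x) + ((assoc b x a + assoc b a x) * x) + ((assoc b x a + assoc b a x) * x) + (assoc b (x * x) a + assoc (x * x) b a) + (assoc b (x * x) a + assoc (x * x) b a) + (assoc b x (a * x) + assoc b (a * x) x) + (assoc b x (a * x) + assoc b (a * x) x) + ((assoc b x a + assoc x b a) * x) + ((assoc b x a + assoc x b a) * x) + (b * (assoc x a x + assoc a x x)) + (b * (assoc x a x + assoc a x x)) + (b * (assoc x x a + assoc x a x)) + (b * (assoc x x a + assoc x a x)) + (x * (assoc b x a + assoc b a x)) + (x * (assoc b x a + assoc b a x)) + (assoc x (b * x) a + assoc (b * x) x a) + (assoc x (b * x) a + assoc (b * x) x a) + (assoc x (b * x) a + assoc (b * x) x a) + (assoc x (b * x) a + assoc (b * x) x a) + (x * (assoc b a x + assoc a b x)) + (x * (assoc b a x + assoc a b x)) + (x * (assoc b a x + assoc a b x)) + (x * (assoc b a x + assoc a b x)) + (x * (assoc x b a + assoc x a b)) + (x * (assoc x b a + assoc x a b)))" by (simp add: assoc_def asa_ring algebra_simps)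
  have "((a*x)*(x*b) - ((a*(x*x))*b - x * assoc a x b)) + ((a*x)*(x*b) - ((a*(x*x))*b - x * assoc a x b)) + ((a*x)*(x*b) - ((a*(x*x))*b - x * assoc a x b)) + ((a*x)*(x*b) - ((a*(x*x))*b - x * assoc a x b)) + ((a*x)*(x*b) - ((a*(x*x))*b - x * assoc a x b)) + ((a*x)*(x*b) - ((a*(x*x))*b - x * assoc a x b)) = 0" using e g0 g1 g2 g3 g4 g5 g6 g7 g8 g9 g10 g11 g12 g13 g14 g15 g16 g17 g18 g19 g20 g21 g22 g23 g24 g25 g26 g27 g28 g29 g30 g31 g32 g33 g34 by simp
  then have "(a*x)*(x*b) - ((a*(x*x))*b - x * assoc a x b) = 0" by (rule rep_zero6)
  then show ?thesis by (simp add: assoc_def algebra_simps)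
qed

lemma id_LM: "((x*y)*x)*z = x*(y*(x*(z::'a::alt_star_algebra)))"
proof -
  have g0: "((assoc y x x + assoc y x x) * z) = 0" by (simp add: assoc_swap12 assoc_swap23)
  have g1: "((assoc z x x + assoc z x x) * y) = 0" by (simp add: assoc_swap12 assoc_swap23)
  have g2: "((assoc z y x + assoc y z x) * x) = 0" by (simp add: assoc_swap12 assoc_swap23)
  have g3: "(assoc (y * z) x x + assoc (y * z) x x) = 0" by (simp add: assoc_swap12 assoc_swap23)
  have g4: "(assoc (z * y) x x + assoc (z * y) x x) = 0" by (simp add: assoc_swap12 assoc_swap23)
  have g5: "(assoc x (x * y) z + assoc (x * y) x z) = 0" by (simp add: assoc_swap12 assoc_swap23)
  have g6: "(assoc x (y * x) z + assoc (y * x) x z) = 0" by (simp add: assoc_swap12 assoc_swap23)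
  have g7: "(assoc x (z * x) y + assoc (z * x) x y) = 0" by (simp add: assoc_swap12 assoc_swap23)
  have g8: "(assoc x y (z * x) + assoc x (z * x) y) = 0" by (simp add: assoc_swap12 assoc_swap23)
  have g9: "(assoc x z (x * y) + assoc x (x * y) z) = 0" by (simp add: assoc_swap12 assoc_swap23)
  have g10: "(assoc x z (y * x) + assoc x (y * x) z) = 0" by (simp add: assoc_swap12 assoc_swap23)
  have g11: "(assoc y x (x * z) + assoc x y (x * z)) = 0" by (simp add: assoc_swap12 assoc_swap23)
  have g12: "(assoc y x (z * x) + assoc x y (z * x)) = 0" by (simp add: assoc_swap12 assoc_swap23)
  have g13: "(assoc y x (z * x) + assoc y (z * x) x) = 0" by (simp add: assoc_swap12 assoc_swap23)
  have g14: "(assoc y z (x * x) + assoc y (x * x) z) = 0" by (simp add: assoc_swap12 assoc_swap23)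
  have g15: "(assoc z x (x * y) + assoc x z (x * y)) = 0" by (simp add: assoc_swap12 assoc_swap23)
  have g16: "(assoc z x (y * x) + assoc x z (y * x)) = 0" by (simp add: assoc_swap12 assoc_swap23)
  have g17: "(assoc z x (y * x) + assoc z (y * x) x) = 0" by (simp add: assoc_swap12 assoc_swap23)
  have g18: "(assoc z y (x * x) + assoc y z (x * x)) = 0" by (simp add: assoc_swap12 assoc_swap23)
  have g19: "(assoc z y (x * x) + assoc z (x * x) y) = 0" by (simp add: assoc_swap12 assoc_swap23)
  have g20: "(y * (assoc x z x + assoc x x z)) = 0" by (simp add: assoc_swap12 assoc_swap23)
  have g21: "(y * (assoc z x x + assoc x z x)) = 0" by (simp add: assoc_swap12 assoc_swap23)
  have g22: "(y * (assoc z x x + assoc z x x)) = 0" by (simp add: assoc_swap12 assoc_swap23)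
  have g23: "(z * (assoc x y x + assoc x x y)) = 0" by (simp add: assoc_swap12 assoc_swap23)
  have g24: "(z * (assoc y x x + assoc x y x)) = 0" by (simp add: assoc_swap12 assoc_swap23)
  have g25: "(z * (assoc y x x + assoc y x x)) = 0" by (simp add: assoc_swap12 assoc_swap23)
  have e: "(((x*y)*x)*z - x*(y*(x*z))) + (((x*y)*x)*z - x*(y*(x*z))) = ((assoc x (x * y) z + assoc (x * y) x z) + (assoc x (x * y) z + assoc (x * y) x z) + (assoc z y (x * x) + assoc y z (x * x)) + (assoc z y (x * x) + assoc y z (x * x)) + (assoc z y (x * x) + assoc y z (x * x)) + (assoc z y (x * x) + assoc y z (x * x)) + (assoc x (z * x) y + assoc (z * x) x y) + (assoc x (z * x) y + assoc (z * x) x y) + (assoc z x (x * y) + assoc x z (x * y)) + (assoc z x (x * y) + assoc x z (x * y)) + (z * (assoc y x x + assoc x y x)) + (z * (assoc y x x + assoc x y x)) + (assoc (y * z) x x + assoc (y * z) x x) + (assoc z x (y * x) + assoc x z (y * x)) + (assoc z x (y * x) + assoc x z (y * x)) + (assoc y x (z * x) + assoc x y (z * x)) + (assoc y x (z * x) + assoc x y (z * x)) + (assoc (z * y) x x + assoc (z * y) x x) + (y * (assoc z x x + assoc x z x)) + (y * (assoc z x x + assoc x z x)) + (assoc x (y * x) z + assoc (y * x) x z) + (assoc x (y * x) z + assoc (y * x) x z) + (assoc y x (x * z) + assoc x y (x * z)) + (assoc y x (x * z) + assoc x y (x * z))) - ((assoc x z (x * y) + assoc x (x * y) z) + (assoc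 x z (x * y) + assoc x (x * y) z) + ((assoc z x x + assoc z x x) * y) + (assoc z y (x * x) + assoc z (x * x) y) + (assoc z y (x * x) + assoc z (x * x) y) + (z * (assoc x y x + assoc x x y)) + (z * (assoc x y x + assoc x x y)) + (z * (assoc y x x + assoc y x x)) + (z * (assoc y x x + assoc y x x)) + (assoc y z (x * x) + assoc y (x * x) z) + (assoc y z (x * x) + assoc y (x * x) z) + ((assoc y x x + assoc y x x) * z) + ((assoc z y x + assoc y z x) * x) + ((assoc z y x + assoc y z x) * x) + (assoc z x (y * x) + assoc z (y * x) x) + (assoc z x (y * x) + assoc z (y * x) x) + (assoc y x (z * x) + assoc y (z * x) x) + (assoc y x (z * x) + assoc y (z * x) x) + (assoc x z (y * x) + assoc x (y * x) z) + (assoc x z (y * x) + assoc x (y * x) z) + (assoc x y (z * x) + assoc x (z * x) y) + (assoc x y (z * x) + assoc x (z * x) y) + (y * (assoc z x x + assoc z x x)) + (y * (assoc z x x + assoc z x x)) + (y * (assoc x z x + assoc x x z)) + (y * (assoc x z x + assoc x x z)))" by (simp add: assoc_def asa_ring algebra_simps)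
  have "(((x*y)*x)*z - x*(y*(x*z))) + (((x*y)*x)*z - x*(y*(x*z))) = 0" using e g0 g1 g2 g3 g4 g5 g6 g7 g8 g9 g10 g11 g12 g13 g14 g15 g16 g17 g18 g19 g20 g21 g22 g23 g24 g25 by simp
  then have "((x*y)*x)*z - x*(y*(x*z)) = 0" by (rule rep_zero2)
  then show ?thesis by (simp add: assoc_def algebra_simps)
qed

lemma id_MM: "(x*y)*(z*x) = (x*(y*z))*(x::'a::alt_star_algebra)"
proof -
  have g0: "((assoc y x x + assoc y x x) * z) = 0" by (simp add: assoc_swap12 assoc_swap23)
  have g1: "((assoc z x x + assoc x z x) * y) = 0" by (simp add: assoc_swap12 assoc_swap23)
  have g2: "((assoc z y x + assoc y z x) * x) = 0" by (simp add: assoc_swap12 assoc_swap23)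
  have g3: "(assoc (y * z) x x + assoc x (y * z) x) = 0" by (simp add: assoc_swap12 assoc_swap23)
  have g4: "(assoc (z * y) x x + assoc (z * y) x x) = 0" by (simp add: assoc_swap12 assoc_swap23)
  have g5: "(assoc x (x * z) y + assoc (x * z) x y) = 0" by (simp add: assoc_swap12 assoc_swap23)
  have g6: "(assoc x (y * x) z + assoc (y * x) x z) = 0" by (simp add: assoc_swap12 assoc_swap23)
  have g7: "(assoc x (z * x) y + assoc (z * x) x y) = 0" by (simp add: assoc_swap12 assoc_swap23)
  have g8: "(assoc x y (x * z) + assoc x (x * z) y) = 0" by (simp add: assoc_swap12 assoc_swap23)
  have g9: "(assoc x y (z * x) + assoc x (z * x) y) = 0" by (simp add: assoc_swap12 assoc_swap23)
  have g10: "(assoc x z (y * x) + assoc x (y * x) z) = 0" by (simp add: assoc_swap12 assoc_swap23)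
  have g11: "(assoc y x (x * z) + assoc x y (x * z)) = 0" by (simp add: assoc_swap12 assoc_swap23)
  have g12: "(assoc y x (z * x) + assoc x y (z * x)) = 0" by (simp add: assoc_swap12 assoc_swap23)
  have g13: "(assoc y x (z * x) + assoc y (z * x) x) = 0" by (simp add: assoc_swap12 assoc_swap23)
  have g14: "(assoc y z (x * x) + assoc y (x * x) z) = 0" by (simp add: assoc_swap12 assoc_swap23)
  have g15: "(assoc z x (x * y) + assoc x z (x * y)) = 0" by (simp add: assoc_swap12 assoc_swap23)
  have g16: "(assoc z x (y * x) + assoc x z (y * x)) = 0" by (simp add: assoc_swap12 assoc_swap23)
  have g17: "(assoc z x (y * x) + assoc z (y * x) x) = 0" by (simp add: assoc_swap12 assoc_swap23)
  have g18: "(assoc z y (x * x) + assoc y z (x * x)) = 0" by (simp add: assoc_swap12 assoc_swap23)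
  have g19: "(assoc z y (x * x) + assoc z (x * x) y) = 0" by (simp add: assoc_swap12 assoc_swap23)
  have g20: "(x * (assoc z y x + assoc y z x)) = 0" by (simp add: assoc_swap12 assoc_swap23)
  have g21: "(x * (assoc z y x + assoc z x y)) = 0" by (simp add: assoc_swap12 assoc_swap23)
  have g22: "(y * (assoc x z x + assoc x x z)) = 0" by (simp add: assoc_swap12 assoc_swap23)
  have g23: "(y * (assoc z x x + assoc x z x)) = 0" by (simp add: assoc_swap12 assoc_swap23)
  have g24: "(y * (assoc z x x + assoc z x x)) = 0" by (simp add: assoc_swap12 assoc_swap23)
  have g25: "(z * (assoc x y x + assoc x x y)) = 0" by (simp add: assoc_swap12 assoc_swap23)
  have g26: "(z * (assoc y x x + assoc x y x)) = 0" by (simp add: assoc_swap12 assoc_swap23)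
  have g27: "(z * (assoc y x x + assoc y x x)) = 0" by (simp add: assoc_swap12 assoc_swap23)
  have e: "((x*y)*(z*x) - (x*(y*z))*x) + ((x*y)*(z*x) - (x*(y*z))*x) = ((assoc x y (z * x) + assoc x (z * x) y) + (assoc x y (z * x) + assoc x (z * x) y) + (assoc x y (z * x) + assoc x (z * x) y) + (assoc x y (z * x) + assoc x (z * x) y) + (x * (assoc z y x + assoc z x y)) + (x * (assoc z y x + assoc z x y)) + ((assoc z y x + assoc y z x) * x) + ((assoc z y x + assoc y z x) * x) + (assoc z x (y * x) + assoc z (y * x) x) + (assoc z x (y * x) + assoc z (y * x) x) + (assoc y x (z * x) + assoc y (z * x) x) + (assoc y x (z * x) + assoc y (z * x) x) + (assoc x z (y * x) + assoc x (y * x) z) + (assoc x z (y * x) + assoc x (y * x) z) + (z * (assoc y x x + assoc y x x)) + (z * (assoc y x x + assoc y x x)) + (y * (assoc z x x + assoc z x x)) + (y * (assoc z x x + assoc z x x)) + (assoc x y (x * z) + assoc x (x * z) y) + (assoc x y (x * z) + assoc x (x * z) y) + (y * (assoc x z x + assoc x x z)) + (y * (assoc x z x + assoc x x z)) + (assoc z y (x * x) + assoc z (x * x) y) + (assoc z y (x * x) + assoc z (x * x) y) + (z * (assoc x y x + assoc x x y)) + (z * (assoc x y x + assoc x x y)) + (assoc y z (x * x) + assoc y (x * x) z) + (assoc y z (x * x) + assoc y (x * x) z) + ((assoc y x x + assoc y x x) * z) + ((assoc z x x + assoc x z x) * y) + ((assoc z x x + assoc x z x) * y)) - ((assoc x (z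 * x) y + assoc (z * x) x y) + (assoc x (z * x) y + assoc (z * x) x y) + (assoc z x (x * y) + assoc x z (x * y)) + (assoc z x (x * y) + assoc x z (x * y)) + (x * (assoc z y x + assoc y z x)) + (x * (assoc z y x + assoc y z x)) + (assoc z y (x * x) + assoc y z (x * x)) + (assoc z y (x * x) + assoc y z (x * x)) + (assoc z y (x * x) + assoc y z (x * x)) + (assoc z y (x * x) + assoc y z (x * x)) + (assoc z x (y * x) + assoc x z (y * x)) + (assoc z x (y * x) + assoc x z (y * x)) + (assoc y x (z * x) + assoc x y (z * x)) + (assoc y x (z * x) + assoc x y (z * x)) + (assoc (z * y) x x + assoc (z * y) x x) + (assoc x (x * z) y + assoc (x * z) x y) + (assoc x (x * z) y + assoc (x * z) x y) + (y * (assoc z x x + assoc x z x)) + (y * (assoc z x x + assoc x z x)) + (assoc x (y * x) z + assoc (y * x) x z) + (assoc x (y * x) z + assoc (y * x) x z) + (assoc y x (x * z) + assoc x y (x * z)) + (assoc y x (x * z) + assoc x y (x * z)) + (z * (assoc y x x + assoc x y x)) + (z * (assoc y x x + assoc x y x)) + (assoc (y * z) x x + assoc x (y * z) x) + (assoc (y * z) x x + assoc x (y * z) x))" by (simp add: assoc_def asa_ring algebra_simps)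
  have "((x*y)*(z*x) - (x*(y*z))*x) + ((x*y)*(z*x) - (x*(y*z))*x) = 0" using e g0 g1 g2 g3 g4 g5 g6 g7 g8 g9 g10 g11 g12 g13 g14 g15 g16 g17 g18 g19 g20 g21 g22 g23 g24 g25 g26 g27 by simp
  then have "(x*y)*(z*x) - (x*(y*z))*x = 0" by (rule rep_zero2)
  then show ?thesis by (simp add: assoc_def algebra_simps)
qed


lemma assoc_anti12: "assoc (b::'a::alt_star_algebra) a c = - assoc a b c"
  using assoc_swap12[of a b c] by (simp add: eq_neg_iff_add_eq_0 add.commute)
lemma assoc_anti23: "assoc (a::'a::alt_star_algebra) c b = - assoc a b c"
  using assoc_swap23[of a b c] by (simp add: eq_neg_iff_add_eq_0 add.commute)
lemma assoc_cyc: "assoc (a::'a::alt_star_algebra) b c = assoc b c a"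
proof -
  have "assoc b c a = - assoc b a c" by (rule assoc_anti23)
  also have "assoc b a c = - assoc a b c" by (rule assoc_anti12)
  finally show ?thesis by simp
qed

lemma teich: "assoc ((a::'a::alt_star_algebra)*x) y b = assoc a (x*y) b + a * assoc x y b + assoc a x y * b - assoc a x (y*b)"
  by (simp add: assoc_def asa_ring algebra_simps)

lemma assoc_add1: "assoc ((a::'a::alt_star_algebra)+b) c d = assoc a c d + assoc b c d"
  by (simp add: assoc_def asa_ring algebra_simps)
lemma assoc_add2: "assoc (a::'a::alt_star_algebra) (b+c) d = assoc a b d + assoc a c d"
  by (simp add: assoc_def asa_ring algebra_simps)
lemma assoc_add3: "assoc (a::'a::alt_star_algebra) b (c+d) = assoc a b c + assoc a b d"
  by (simp add: assoc_def asa_ring algebra_simps)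
lemma assoc_scale1: "assoc (r *\<^sub>R (a::'a::alt_star_algebra)) c d = r *\<^sub>R assoc a c d"
  by (simp add: assoc_def asa_ring algebra_simps)
lemma assoc_scale2: "assoc (a::'a::alt_star_algebra) (r *\<^sub>R b) d = r *\<^sub>R assoc a b d"
  by (simp add: assoc_def asa_ring algebra_simps)
lemma assoc_scale3: "assoc (a::'a::alt_star_algebra) b (r *\<^sub>R c) = r *\<^sub>R assoc a b c"
  by (simp add: assoc_def asa_ring algebra_simps)
lemma assoc_minus1: "assoc (- (a::'a::alt_star_algebra)) c d = - assoc a c d"
  by (simp add: assoc_def asa_ring algebra_simps)
lemma assoc_minus2: "assoc (a::'a::alt_star_algebra) (- b) d = - assoc a b d"
  by (simp add: assoc_def asa_ring algebra_simps)
lemma assoc_minus3: "assoc (a::'a::alt_star_algebra) b (- c) = - assoc a b c"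
  by (simp add: assoc_def asa_ring algebra_simps)
lemma assoc_diff1: "assoc ((a::'a::alt_star_algebra)-b) c d = assoc a c d - assoc b c d"
  by (simp add: assoc_def asa_ring algebra_simps)
lemma assoc_diff2: "assoc (a::'a::alt_star_algebra) (b-c) d = assoc a b d - assoc a c d"
  by (simp add: assoc_def asa_ring algebra_simps)
lemma assoc_diff3: "assoc (a::'a::alt_star_algebra) b (c-d) = assoc a b c - assoc a b d"
  by (simp add: assoc_def asa_ring algebra_simps)
lemmas assoc_lin = assoc_add1 assoc_add2 assoc_add3 assoc_scale1 assoc_scale2 assoc_scale3
  assoc_minus1 assoc_minus2 assoc_minus3 assoc_diff1 assoc_diff2 assoc_diff3

lemma assoc_xxy[simp]: "assoc (x::'a::alt_star_algebra) x y = 0"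
  using asa_alt_xxy by (simp add: assoc_def)
lemma assoc_xyx[simp]: "assoc (x::'a::alt_star_algebra) y x = 0"
  using asa_alt_xyx by (simp add: assoc_def)
lemma assoc_yxx[simp]: "assoc (y::'a::alt_star_algebra) x x = 0"
  using asa_alt_yxx by (simp add: assoc_def)

lemma nuc1: "r \<in> nucleus \<Longrightarrow> assoc (r::'a::alt_star_algebra) a b = 0"
  by (simp add: nucleus_def)
lemma nuc2: "r \<in> nucleus \<Longrightarrow> assoc a (r::'a::alt_star_algebra) b = 0"
  using nuc1[of r b a] assoc_cyc[of a r b] by simp
lemma nuc3: "r \<in> nucleus \<Longrightarrow> assoc a b (r::'a::alt_star_algebra) = 0"
  using nuc1[of r a b] assoc_cyc[of a b r] assoc_cyc[of b r a] by simp

lemma mult_assoc_from: "assoc (a::'a::alt_star_algebra) b c = 0 \<Longrightarrow> (a*b)*c = a*(b*c)"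
  by (simp add: assoc_def)

lemma rl_mult_left[simp]: "rl r * (a::'a::alt_star_algebra) = r *\<^sub>R a"
  by (simp add: rl_def asa_scaleR_left asa_one_left)
lemma rl_mult_right[simp]: "(a::'a::alt_star_algebra) * rl r = r *\<^sub>R a"
  by (simp add: rl_def asa_scaleR_right asa_one_right)
lemma invol_rl[simp]: "invol (rl r :: 'a::alt_star_algebra) = rl r"
  by (simp add: rl_def invol_real)
lemma rl_nucleus: "(rl r :: 'a::alt_star_algebra) \<in> nucleus"
  by (simp add: nucleus_def assoc_def asa_scaleR_left asa_scaleR_right)
lemma rl_inj: "(rl a :: 'a::alt_star_algebra) = rl b \<Longrightarrow> a = b"
  using asa_one_neq_zero by (auto simp: rl_def scaleR_cancel_right)
lemma rl_one: "(rl 1 :: 'a::alt_star_algebra) = 1" by (simp add: rl_def)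
lemma rl_zero[simp]: "(rl 0 :: 'a::alt_star_algebra) = 0" by (simp add: rl_def)

lemma invol_0[simp]: "invol (0::'a::alt_star_algebra) = 0"
  using invol_scaleR[of 0 "0::'a"] by simp
lemma invol_minus[simp]: "invol (- (a::'a::alt_star_algebra)) = - invol a"
  using invol_scaleR[of "-1" a] by simp
lemma invol_diff[simp]: "invol ((a::'a::alt_star_algebra) - b) = invol a - invol b"
  using invol_add[of a "-b"] by simp
lemma invol_one[simp]: "invol (1::'a::alt_star_algebra) = 1"
  using invol_real[of 1] by simp
lemmas invol_simps[simp] = invol_add invol_scaleR invol_invol invol_mult

lemma sa_invol: "J \<in> SA \<Longrightarrow> invol J = - (J::'a::alt_star_algebra)"
  by (simp add: SA_def trc_def eq_neg_iff_add_eq_0 add.commute)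
lemma sa_sq: "J \<in> SA \<Longrightarrow> J * J = - (1::'a::alt_star_algebra)"
proof -
  assume J: "J \<in> SA"
  then have "J * invol J = 1" by (simp add: SA_def nrm_def)
  then have "- (J * J) = 1" using sa_invol[OF J] by simp
  then show ?thesis by (metis minus_minus)
qed
lemma sa_neg: "J \<in> SA \<Longrightarrow> - J \<in> (SA::'a::alt_star_algebra set)"
proof -
  assume J: "J \<in> SA"
  have "trc (- J) = 0" using sa_invol[OF J] by (simp add: trc_def)
  moreover have "nrm (- J) = 1" using J by (simp add: SA_def nrm_def)
  ultimately show ?thesis by (simp add: SA_def)
qed
lemma sa_cancel: "J \<in> SA \<Longrightarrow> J * z = 0 \<Longrightarrow> z = (0::'a::alt_star_algebra)"
proof -
  assume J: "J \<in> SA" and h: "J * z = 0"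
  have "(J*J)*z = J*(J*z)" using asa_alt_xxy[of J z] by simp
  then show ?thesis using h sa_sq[OF J] by (simp add: asa_one_left)
qed
lemma sa_JJz: "J \<in> SA \<Longrightarrow> J * (J * z) = - (z::'a::alt_star_algebra)"
proof -
  assume J: "J \<in> SA"
  have "(J*J)*z = J*(J*z)" using asa_alt_xxy[of J z] by simp
  then show ?thesis using sa_sq[OF J] by (simp add: asa_one_left)
qed
lemma sa_zJJ: "J \<in> SA \<Longrightarrow> (z * J) * J = - (z::'a::alt_star_algebra)"
proof -
  assume J: "J \<in> SA"
  have "(z*J)*J = z*(J*J)" using asa_alt_yxx[of z J] by simp
  then show ?thesis using sa_sq[OF J] by (simp add: asa_one_right)
qed

lemma inv_prop:
  fixes x e :: "'a::alt_star_algebra"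
  assumes xe: "x * e = 1" and ex: "e * x = 1"
  shows "assoc e x z = 0"
proof -
  have G1: "x * (e * w) = w + assoc e x w" for w
  proof -
    have "assoc x e w = - assoc e x w" by (rule assoc_anti12)
    then show ?thesis using xe by (simp add: assoc_def asa_one_left algebra_simps)
  qed
  have Ge: "assoc e x w * e = 0" for w
  proof -
    have "(e*x)*(w*e) = (e*(x*w))*e" by (rule id_MM)
    then have "w*e = (e*(x*w))*e" using ex by (simp add: asa_one_left)
    then show ?thesis using ex by (simp add: assoc_def asa_diff_left asa_one_left)
  qed
  have Gx: "assoc e x w * x = 0" for w
  proof -
    have "(x*e)*(w*x) = (x*(e*w))*x" by (rule id_MM)
    then have "w*x = (w + assoc e x w)*x" using xe G1 by (simp add: asa_one_left)
    then show ?thesis by (simp add: asa_distrib_left)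
  qed
  define u where "u = assoc e x z"
  have ux: "u * x = 0" unfolding u_def by (rule Gx)
  have ue: "u * e = 0" unfolding u_def by (rule Ge)
  have "assoc u x e = - u" using ux xe by (simp add: assoc_def asa_one_right)
  moreover have "assoc u x e = - assoc e x u"
  proof -
    have "assoc u x e = assoc x e u" by (rule assoc_cyc)
    also have "\<dots> = assoc e u x" by (rule assoc_cyc)
    also have "\<dots> = - assoc e x u" by (rule assoc_anti23)
    finally show ?thesis .
  qed
  ultimately have Gu: "assoc e x u = u" by simp
  have xeu: "x * (e * u) = u + u" using G1[of u] Gu by simp
  have "((x*(e*u))*x)*e = x*((e*u)*(x*e))" by (rule id_LM)
  then have "((u+u)*x)*e = x*(e*u)" using xeu xe by (simp add: asa_one_right)
  then have "u + u = 0" using ux xeu by (simp add: asa_distrib_left)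
  then show ?thesis unfolding u_def by (rule rep_zero2)
qed

lemma inv_prop_all:
  fixes x e :: "'a::alt_star_algebra"
  assumes xe: "x * e = 1" and ex: "e * x = 1"
  shows "assoc e x z = 0" "assoc x e z = 0" "assoc z e x = 0" "assoc z x e = 0" "assoc e z x = 0" "assoc x z e = 0"
proof -
  have h: "assoc e x z = 0" by (rule inv_prop[OF xe ex])
  have c1: "assoc z e x = assoc e x z" by (rule assoc_cyc)
  have c2: "assoc x z e = assoc z e x" by (rule assoc_cyc)
  have a1: "assoc x e z = - assoc e x z" by (rule assoc_anti12)
  have a2: "assoc z x e = - assoc x z e" by (rule assoc_anti12)
  have a3: "assoc e z x = - assoc e x z" by (rule assoc_anti23)
  show "assoc e x z = 0" by (rule h)
  show "assoc x e z = 0" using h a1 by simp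
  show "assoc z e x = 0" using h c1 by simp
  show "assoc x z e = 0" using h c1 c2 by simp
  show "assoc z x e = 0" using h c1 c2 a2 by simp
  show "assoc e z x = 0" using h a3 by simp
qed

lemma inv_unique:
  fixes x e e' :: "'a::alt_star_algebra"
  assumes xe: "x * e = 1" and ex: "e * x = 1" and xe': "x * e' = 1" and ex': "e' * x = 1"
  shows "e' = e"
proof -
  have "assoc e' x e = 0" by (rule inv_prop[OF xe' ex'])
  then have "(e'*x)*e = e'*(x*e)" by (simp add: assoc_def)
  then show ?thesis using xe ex' by (simp add: asa_one_left asa_one_right)
qed

lemma inv_el_eq:
  fixes x e :: "'a::alt_star_algebra"
  assumes xe: "x * e = 1" and ex: "e * x = 1"
  shows "inv_el x = e"
  unfolding inv_el_def
proof (rule the_equality)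
  show "x * e = 1 \<and> e * x = 1" using xe ex by simp
  fix b assume "x * b = 1 \<and> b * x = 1"
  then show "b = e" using inv_unique[OF xe ex, of b] by simp
qed


definition cen :: "'a::alt_star_algebra \<Rightarrow> bool" where
  "cen r \<longleftrightarrow> r \<in> nucleus \<and> (\<forall>a. r * a = a * r)"

lemma cen_center: "cen r \<longleftrightarrow> r \<in> center"
  by (simp add: cen_def center_def)

lemma cen_nuc: "cen c \<Longrightarrow> (c::'a::alt_star_algebra) \<in> nucleus" by (simp add: cen_def)
lemma cen_comm: "cen c \<Longrightarrow> c * a = a * (c::'a::alt_star_algebra)"
  by (simp add: cen_def)
lemma cen_pull1: "cen c \<Longrightarrow> w * (c * z) = c * ((w::'a::alt_star_algebra) * z)"
proof -
  assume c: "cen c"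
  have "w * (c * z) = (w * c) * z" using nuc2[OF cen_nuc[OF c], of w z] by (simp add: assoc_def)
  also have "\<dots> = (c * w) * z" using cen_comm[OF c, of w] by simp
  also have "\<dots> = c * (w * z)" using nuc1[OF cen_nuc[OF c], of w z] by (simp add: assoc_def)
  finally show ?thesis .
qed
lemma cen_pull2: "cen c \<Longrightarrow> (c * w) * z = c * ((w::'a::alt_star_algebra) * z)"
  using nuc1[OF cen_nuc, of c w z] by (simp add: assoc_def)
lemma cen_pull3: "cen c \<Longrightarrow> (w * c) * z = c * ((w::'a::alt_star_algebra) * z)"
  using nuc1[OF cen_nuc, of c w z] cen_comm[of c w] by (simp add: assoc_def)
lemma cen_pull4: "cen c \<Longrightarrow> w * (z * c) = c * ((w::'a::alt_star_algebra) * z)"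
proof -
  assume c: "cen c"
  have "w * (z * c) = (w * z) * c" using nuc3[OF cen_nuc[OF c], of w z] by (simp add: assoc_def)
  then show ?thesis using cen_comm[OF c, of "w*z"] by simp
qed
lemma cen_assoc1: "cen c \<Longrightarrow> assoc (c * a) b z = c * assoc (a::'a::alt_star_algebra) b z"
proof -
  assume c: "cen c"
  have "((c*a)*b)*z = c*((a*b)*z)" using cen_pull2[OF c, of a b] cen_pull2[OF c, of "a*b" z] by simp
  moreover have "(c*a)*(b*z) = c*(a*(b*z))" by (rule cen_pull2[OF c])
  ultimately show ?thesis by (simp add: assoc_def asa_diff_right)
qed
lemma cen_assoc2: "cen c \<Longrightarrow> assoc a (c * b) z = c * assoc (a::'a::alt_star_algebra) b z"
proof -
  assume c: "cen c"
  have "(a*(c*b))*z = c*((a*b)*z)" using cen_pull1[OF c, of a b] cen_pull2[OF c, of "a*b" z] by simp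
  moreover have "a*((c*b)*z) = c*(a*(b*z))" using cen_pull2[OF c, of b z] cen_pull1[OF c, of a "b*z"] by simp
  ultimately show ?thesis by (simp add: assoc_def asa_diff_right)
qed
lemma cen_assoc3: "cen c \<Longrightarrow> assoc a b (c * z) = c * assoc (a::'a::alt_star_algebra) b z"
proof -
  assume c: "cen c"
  have "(a*b)*(c*z) = c*((a*b)*z)" using cen_pull1[OF c, of "a*b" z] by simp
  moreover have "a*(b*(c*z)) = c*(a*(b*z))" using cen_pull1[OF c, of b z] cen_pull1[OF c, of a "b*z"] by simp
  ultimately show ?thesis by (simp add: assoc_def asa_diff_right)
qed

lemma cen_inv:
  fixes N n :: "'a::alt_star_algebra"
  assumes cN: "cen N" and Nn: "N * n = 1" and nN: "n * N = 1"
  shows "cen n"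
proof -
  have N_canc: "N * w = 0 \<Longrightarrow> w = 0" for w
  proof -
    assume h: "N * w = 0"
    have "(n * N) * w = n * (N * w)" using nuc2[OF cen_nuc[OF cN], of n w] by (simp add: assoc_def)
    then show ?thesis using h nN by (simp add: asa_one_left)
  qed
  have comm: "n * a = a * n" for a
  proof -
    have "N * (n * a) = (N * n) * a" using nuc1[OF cen_nuc[OF cN], of n a] by (simp add: assoc_def)
    then have 1: "N * (n * a) = a" using Nn by (simp add: asa_one_left)
    have "N * (a * n) = (N * a) * n" using nuc1[OF cen_nuc[OF cN], of a n] by (simp add: assoc_def)
    also have "\<dots> = (a * N) * n" using cen_comm[OF cN, of a] by simp
    also have "\<dots> = a * (N * n)" using nuc2[OF cen_nuc[OF cN], of a n] by (simp add: assoc_def)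
    finally have 2: "N * (a * n) = a" using Nn by (simp add: asa_one_right)
    have "N * (n * a - a * n) = 0" using 1 2 by (simp add: asa_diff_right)
    then have "n * a - a * n = 0" by (rule N_canc)
    then show ?thesis by simp
  qed
  have nuc: "assoc n a b = 0" for a b
  proof -
    have "N * assoc n a b = N * ((n*a)*b) - N * (n*(a*b))" by (simp add: assoc_def asa_diff_right)
    also have "N * ((n*a)*b) = (N*(n*a))*b" using nuc1[OF cen_nuc[OF cN], of "n*a" b] by (simp add: assoc_def)
    also have "N*(n*a) = a" using nuc1[OF cen_nuc[OF cN], of n a] Nn by (simp add: assoc_def asa_one_left)
    also have "N * (n*(a*b)) = (N*n)*(a*b)" using nuc1[OF cen_nuc[OF cN], of n "a*b"] by (simp add: assoc_def)
    finally have "N * assoc n a b = 0" using Nn by (simp add: asa_one_left)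
    then show ?thesis by (rule N_canc)
  qed
  show ?thesis using comm nuc unfolding cen_def nucleus_def by blast
qed

lemma ca_facts:
  fixes d :: "'a::alt_star_algebra"
  assumes dCA: "d \<in> CA" and dnz: "d \<noteq> 0"
  obtains n e where
   "cen (d * invol d)" "invol d * d = d * invol d"
   "cen n" "n * (d * invol d) = 1" "(d * invol d) * n = 1" "invol n = n"
   "e = n * invol d" "d * e = 1" "e * d = 1" "invol d = (d * invol d) * e" "invol e = n * d"
proof -
  define N where "N = d * invol d"
  define N' where "N' = invol d * d"
  have ca: "nrm d \<in> center \<and> invertible (nrm d) \<and> nrm (invol d) \<in> center \<and> invertible (nrm (invol d))"
    using dCA dnz unfolding CA_def by blast
  have cN: "cen N" using ca by (simp add: cen_center N_def nrm_def)
  have iN: "invertible N" using ca by (simp add: N_def nrm_def)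
  have cN': "cen N'" using ca by (simp add: cen_center N'_def nrm_def)
  obtain n where Nn: "N * n = 1" and nN: "n * N = 1" using iN by (auto simp: invertible_def)
  have cn: "cen n" by (rule cen_inv[OF cN Nn nN])
  have iNN: "invol N = N" by (simp add: N_def)
  have "invol (N * n) = 1" using Nn by simp
  then have "invol n * N = 1" using iNN by simp
  moreover have "invol (n * N) = 1" using nN by simp
  then have "N * invol n = 1" using iNN by simp
  ultimately have invn: "invol n = n" using inv_unique[OF Nn nN] by blast
  have NN': "N' = N"
  proof -
    have "d * N' = (d * invol d) * d" using asa_alt_xyx[of d "invol d"] by (simp add: N'_def)
    then have "d * N' = N * d" by (simp add: N_def)
    moreover have "N' * d = d * N'" by (rule cen_comm[OF cN'])
    ultimately have "(N' - N) * d = 0" by (simp add: asa_diff_left)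
    then have "((N' - N) * d) * invol d = 0" by simp
    moreover have "((N' - N) * d) * invol d = (N' - N) * N"
    proof -
      have "N' - N \<in> nucleus" using cen_nuc[OF cN] cen_nuc[OF cN'] by (simp add: nucleus_def assoc_diff1)
      then show ?thesis using nuc1[of "N'-N" d "invol d"] by (simp add: assoc_def N_def)
    qed
    ultimately have "(N' - N) * N = 0" by simp
    then have "((N' - N) * N) * n = 0" by simp
    moreover have "((N' - N) * N) * n = N' - N"
    proof -
      have "N' - N \<in> nucleus" using cen_nuc[OF cN] cen_nuc[OF cN'] by (simp add: nucleus_def assoc_diff1)
      then show ?thesis using nuc1[of "N'-N" N n] Nn by (simp add: assoc_def asa_one_right)
    qed
    ultimately show ?thesis by simp
  qed
  define e where "e = n * invol d"
  have de: "d * e = 1"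
  proof -
    have "d * (n * invol d) = n * (d * invol d)" by (rule cen_pull1[OF cn])
    then show ?thesis using nN by (simp add: e_def N_def)
  qed
  have ed: "e * d = 1"
  proof -
    have "(n * invol d) * d = n * (invol d * d)" by (rule cen_pull2[OF cn])
    then show ?thesis using nN NN' by (simp add: e_def N'_def)
  qed
  have dcNe: "invol d = N * e"
  proof -
    have "N * (n * invol d) = (N * n) * invol d" using nuc1[OF cen_nuc[OF cN], of n "invol d"] by (simp add: assoc_def)
    then show ?thesis using Nn by (simp add: e_def asa_one_left)
  qed
  have inve: "invol e = n * d" using invn cen_comm[OF cn, of d] by (simp add: e_def)
  show ?thesis
    apply (rule that[of n e])
    using cN NN' cn nN Nn invn de ed dcNe inve e_def unfolding N_def N'_def by blast+
qed


locale cad =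
  fixes d n e :: "'a::alt_star_algebra"
  assumes cN: "cen (d * invol d)" and NN': "invol d * d = d * invol d"
    and cn: "cen n" and nN: "n * (d * invol d) = 1" and Nn: "(d * invol d) * n = 1"
    and invn: "invol n = n" and de: "d * e = 1" and ed: "e * d = 1"
    and dcNe: "invol d = (d * invol d) * e" and inve: "invol e = n * d"
begin

abbreviation "NN \<equiv> d * invol d"

lemma ip: "assoc e d z = 0" "assoc d e z = 0" "assoc z e d = 0" "assoc z d e = 0" "assoc e z d = 0" "assoc d z e = 0"
  using inv_prop_all[OF de ed] by auto

lemma N_canc: "NN * w = 0 \<Longrightarrow> w = 0"
proof -
  assume h: "NN * w = 0"
  have "(n * NN) * w = n * (NN * w)" by (rule cen_pull2[OF cn])
  then show ?thesis using h nN by (simp add: asa_one_left)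
qed

lemma nN_pull: "n * (NN * w) = w"
proof -
  have "(n * NN) * w = n * (NN * w)" by (rule cen_pull2[OF cn])
  then show ?thesis using nN by (simp add: asa_one_left)
qed

lemma A_zero: "assoc d (invol d) z = 0"
proof -
  have "assoc d (invol d) z = assoc d (NN * e) z" using dcNe by simp
  also have "\<dots> = NN * assoc d e z" by (rule cen_assoc2[OF cN])
  finally show ?thesis using ip by simp
qed

lemma A2_zero: "assoc (invol d) d z = 0"
proof -
  have "assoc (invol d) d z = assoc (NN * e) d z" using dcNe by simp
  also have "\<dots> = NN * assoc e d z" by (rule cen_assoc1[OF cN])
  finally show ?thesis using ip by simp
qed

lemma G: "(a * invol d) * (d * b) = NN * (a * b) + assoc a (invol d) (d * b)"
proof -
  have a0: "assoc a (invol d) d = 0"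
  proof -
    have "assoc a (invol d) d = assoc a (NN * e) d" using dcNe by simp
    also have "\<dots> = NN * assoc a e d" by (rule cen_assoc2[OF cN])
    finally show ?thesis using ip by simp
  qed
  have s1: "(a * invol d) * d = NN * a"
  proof -
    have "(a * invol d) * d = a * (invol d * d) + assoc a (invol d) d" by (simp add: assoc_def)
    also have "\<dots> = a * NN" using a0 NN' by simp
    also have "\<dots> = NN * a" using cen_comm[OF cN, of a] by simp
    finally show ?thesis .
  qed
  have t: "assoc (a * invol d) d b = assoc a (invol d * d) b + a * assoc (invol d) d b + assoc a (invol d) d * b - assoc a (invol d) (d*b)"
    by (rule teich)
  have t1: "assoc a (invol d * d) b = 0" using NN' nuc2[OF cen_nuc[OF cN], of a b] by simp
  have t2: "assoc (invol d) d b = 0" by (rule A2_zero)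
  have t3: "assoc (a * invol d) d b = - assoc a (invol d) (d*b)" using t t1 t2 a0 by simp
  have "(a * invol d) * (d * b) = ((a * invol d) * d) * b - assoc (a * invol d) d b" by (simp add: assoc_def)
  also have "\<dots> = (NN * a) * b + assoc a (invol d) (d * b)" using s1 t3 by simp
  also have "(NN * a) * b = NN * (a * b)" by (rule cen_pull2[OF cN])
  finally show ?thesis .
qed

lemma K2_SA: assumes I: "I \<in> SA" shows "(d * I) * e \<in> SA"
proof -
  define K where "K = (d * I) * e"
  have K': "K = d * (I * e)" using ip(6)[of I] unfolding K_def by (simp add: assoc_def)
  have "invol K = invol e * (invol I * invol d)" unfolding K_def by simp
  also have "\<dots> = (n * d) * ((- I) * (NN * e))" using inve sa_invol[OF I] dcNe by simp
  also have "\<dots> = - ((n * d) * (I * (NN * e)))" by simp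
  also have "I * (NN * e) = NN * (I * e)" by (rule cen_pull1[OF cN])
  also have "(n * d) * (NN * (I * e)) = n * (d * (NN * (I * e)))" by (rule cen_pull2[OF cn])
  also have "d * (NN * (I * e)) = NN * (d * (I * e))" by (rule cen_pull1[OF cN])
  also have "n * (NN * (d * (I * e))) = d * (I * e)" by (rule nN_pull)
  finally have iK: "invol K = - K" using K' by simp
  have ce: "(I * e) * d = I" using ip(3)[of I] ed by (simp add: assoc_def asa_one_right)
  have "K * K = d * ((I * e) * (d * (I * e)))" using id_xyxy[of d "I*e"] K' by (simp add: assoc_def)
  also have "(I * e) * (d * (I * e)) = ((I * e) * d) * (I * e)" using asa_alt_xyx[of "I*e" d] by simp
  also have "\<dots> = I * (I * e)" using ce by simp
  also have "\<dots> = - e" by (rule sa_JJz[OF I])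
  finally have "K * K = - 1" using de by simp
  then have "nrm K = 1" using iK by (simp add: nrm_def)
  moreover have "trc K = 0" using iK by (simp add: trc_def)
  ultimately show ?thesis unfolding K_def SA_def by simp
qed

lemma K1_SA: assumes I: "I \<in> SA" shows "(e * I) * d \<in> SA"
proof -
  define K where "K = (e * I) * d"
  have K': "K = e * (I * d)" using ip(5)[of I] unfolding K_def by (simp add: assoc_def)
  have "invol K = invol d * (invol I * invol e)" unfolding K_def by simp
  also have "\<dots> = (NN * e) * ((- I) * (n * d))" using inve sa_invol[OF I] dcNe by simp
  also have "\<dots> = - ((NN * e) * (I * (n * d)))" by simp
  also have "I * (n * d) = n * (I * d)" by (rule cen_pull1[OF cn])
  also have "(NN * e) * (n * (I * d)) = NN * (e * (n * (I * d)))" by (rule cen_pull2[OF cN])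
  also have "e * (n * (I * d)) = n * (e * (I * d))" by (rule cen_pull1[OF cn])
  also have "NN * (n * (e * (I * d))) = e * (I * d)"
    using cen_pull2[OF cN, of n "e * (I * d)"] Nn by (simp add: asa_one_left)
  finally have iK: "invol K = - K" using K' by simp
  have dc: "d * (e * I) = I" using ip(2)[of I] de by (simp add: assoc_def asa_one_left)
  have "K * K = (e * I) * (d * ((e * I) * d))" using id_xyxy[of "e*I" d] unfolding K_def by (simp add: assoc_def)
  also have "d * ((e * I) * d) = (d * (e * I)) * d" using asa_alt_xyx[of d "e*I"] by simp
  also have "\<dots> = I * d" using dc by simp
  also have "(e * I) * (I * d) = (e * (I * I)) * d - I * assoc e I d" by (rule id_axxb)
  also have "\<dots> = - 1" using sa_sq[OF I] ip(5)[of I] ed by (simp add: asa_one_right)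
  finally have "K * K = - 1" .
  then have "nrm K = 1" using iK by (simp add: nrm_def)
  moreover have "trc K = 0" using iK by (simp add: trc_def)
  ultimately show ?thesis unfolding K_def SA_def by simp
qed

lemma e_eq: "e = n * invol d"
  using nN_pull[of e] dcNe by simp

lemma zero_from_NP:
  assumes b: "\<beta> \<noteq> 0" and P1: "v * invol v = (\<beta> * \<beta>) *\<^sub>R NN" and P2: "v * invol d + d * invol v = 0"
  shows "\<exists>I\<in>SA. v + \<beta> *\<^sub>R (I * d) = 0"
proof -
  define X where "X = v * invol d"
  define Y where "Y = d * invol v"
  define I where "I = - (1/\<beta>) *\<^sub>R (v * e)"
  have ved: "(v * e) * d = v" using ip(3)[of v] ed by (simp add: assoc_def asa_one_right)
  have f0: "v + \<beta> *\<^sub>R (I * d) = 0" using b ved unfolding I_def by (simp add: asa_scaleR_left)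
  have ve: "v * e = n * X"
    using e_eq cen_pull1[OF cn, of v "invol d"] unfolding X_def by simp
  have ie: "invol e * invol v = n * Y"
    using inve cen_pull2[OF cn, of d "invol v"] unfolding Y_def by simp
  have I2: "I = - (1/\<beta>) *\<^sub>R (n * X)" using ve unfolding I_def by simp
  have "invol I = - (1/\<beta>) *\<^sub>R (invol e * invol v)" unfolding I_def by simp
  then have iI: "invol I = - (1/\<beta>) *\<^sub>R (n * Y)" using ie by simp
  have YX: "Y = - X" using P2 unfolding X_def Y_def by (simp add: eq_neg_iff_add_eq_0 add.commute)
  have trc0: "trc I = 0"
  proof -
    have "I + invol I = - (1/\<beta>) *\<^sub>R (n * X) + - (1/\<beta>) *\<^sub>R (n * Y)"
      unfolding iI unfolding I2 by simp
    then have "trc I = - (1/\<beta>) *\<^sub>R (n * X + n * Y)" by (simp add: trc_def algebra_simps)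
    also have "n * X + n * Y = 0" using YX by simp
    finally show ?thesis by simp
  qed
  have XY: "X * Y = (\<beta> * \<beta>) *\<^sub>R (NN * NN)"
  proof -
    have "X * Y = NN * (v * invol v) + assoc v (invol d) (d * invol v)" unfolding X_def Y_def by (rule G)
    also have "assoc v (invol d) (d * invol v) = 0"
      using id_xyxy[of v "invol d"] YX unfolding X_def Y_def by (simp add: assoc_minus3)
    finally show ?thesis using P1 by (simp add: asa_scaleR_right)
  qed
  have nnNN: "n * (n * (NN * NN)) = 1"
  proof -
    have "(n * NN) * NN = n * (NN * NN)" by (rule cen_pull2[OF cn])
    then have "n * (NN * NN) = NN" using nN by (simp add: asa_one_left)
    then show ?thesis using nN by simp
  qed
  have "I * invol I = ((1/\<beta>) * (1/\<beta>)) *\<^sub>R ((n * X) * (n * Y))"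
    unfolding iI unfolding I2 by (simp add: asa_scaleR_left asa_scaleR_right)
  also have "(n * X) * (n * Y) = n * (n * (X * Y))"
    using cen_pull2[OF cn, of X "n*Y"] cen_pull1[OF cn, of X Y] by simp
  also have "\<dots> = (\<beta> * \<beta>) *\<^sub>R 1" using XY nnNN by (simp add: asa_scaleR_right)
  finally have "nrm I = 1" using b by (simp add: nrm_def)
  then have "I \<in> SA" using trc0 by (simp add: SA_def)
  then show ?thesis using f0 by blast
qed

lemma fc_zero_to_f_zero:
  assumes b: "\<beta> \<noteq> 0" and I: "I \<in> SA" and h: "invol v + \<beta> *\<^sub>R (I * invol d) = 0"
  shows "\<exists>I'\<in>SA. v + \<beta> *\<^sub>R (I' * d) = 0"
proof -
  have "invol (invol v + \<beta> *\<^sub>R (I * invol d)) = 0" using h by simp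
  then have "v - \<beta> *\<^sub>R (d * I) = 0" using sa_invol[OF I] by simp
  then have v: "v = \<beta> *\<^sub>R (d * I)" by simp
  have "((d * I) * e) * d = d * I" using ip(3)[of "d*I"] ed by (simp add: assoc_def asa_one_right)
  then have "v + \<beta> *\<^sub>R ((- ((d * I) * e)) * d) = 0" using v by simp
  moreover have "- ((d * I) * e) \<in> SA" by (rule sa_neg[OF K2_SA[OF I]])
  ultimately show ?thesis by blast
qed

lemma fc_point:
  assumes I0: "I0 \<in> SA" and v: "v = - (\<beta> *\<^sub>R (I0 * d))"
  shows "invol v + \<beta> *\<^sub>R ((- ((e * I0) * d)) * invol d) = 0"
proof -
  have iv: "invol v = \<beta> *\<^sub>R (invol d * I0)" using v sa_invol[OF I0] by simp
  have "((e * I0) * d) * invol d = ((e * I0) * d) * (NN * e)" using dcNe by simp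
  also have "\<dots> = NN * (((e * I0) * d) * e)" by (rule cen_pull1[OF cN])
  also have "((e * I0) * d) * e = e * I0" using ip(4)[of "e*I0"] de by (simp add: assoc_def asa_one_right)
  also have "NN * (e * I0) = (NN * e) * I0" using cen_pull2[OF cN, of e I0] by simp
  also have "\<dots> = invol d * I0" using dcNe by simp
  finally show ?thesis using iv by simp
qed

lemma fc_unique:
  assumes b: "\<beta> \<noteq> 0" and I0: "I0 \<in> SA" and v: "v = - (\<beta> *\<^sub>R (I0 * d))"
    and h: "invol v + \<beta> *\<^sub>R (I * invol d) = 0"
  shows "I = - ((e * I0) * d)"
proof -
  define K where "K = (e * I0) * d"
  have p: "invol v + \<beta> *\<^sub>R ((- K) * invol d) = 0" unfolding K_def by (rule fc_point[OF I0 v])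
  have "\<beta> *\<^sub>R (I * invol d - (- K) * invol d) = (invol v + \<beta> *\<^sub>R (I * invol d)) - (invol v + \<beta> *\<^sub>R ((- K) * invol d))"
    by (simp add: algebra_simps)
  then have "\<beta> *\<^sub>R (I * invol d - (- K) * invol d) = 0" using h p by simp
  then have "I * invol d - (- K) * invol d = 0" using b by simp
  then have "(I + K) * invol d = 0" by (simp add: asa_distrib_left)
  then have "(I + K) * (NN * e) = 0" using dcNe by simp
  then have "NN * ((I + K) * e) = 0" using cen_pull1[OF cN, of "I+K" e] by simp
  then have "(I + K) * e = 0" by (rule N_canc)
  moreover have "((I + K) * e) * d = I + K" using ip(3)[of "I+K"] ed by (simp add: assoc_def asa_one_right)
  ultimately have "I + K = 0" by simp
  then show ?thesis unfolding K_def by (simp add: eq_neg_iff_add_eq_0)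
qed

end

lemma cad_conj: "cad d n e \<Longrightarrow> cad (invol d) n (invol e)"
proof -
  assume c: "cad d n e"
  interpret cad d n e by (rule c)
  show ?thesis
  proof
    show "cen (invol d * invol (invol d))" using cN NN' by simp
    show "invol (invol d) * invol d = invol d * invol (invol d)" using NN' by simp
    show "cen n" by (rule cn)
    show "n * (invol d * invol (invol d)) = 1" using nN NN' by simp
    show "(invol d * invol (invol d)) * n = 1" using Nn NN' by simp
    show "invol n = n" by (rule invn)
    show "invol d * invol e = 1" using ed by (metis invol_mult invol_one)
    show "invol e * invol d = 1" using de by (metis invol_mult invol_one)
    show "invol (invol d) = (invol d * invol (invol d)) * invol e"
      using NN' inve cen_pull1[OF cn, of NN d] nN_pull[of d] by simp
    show "invol (invol e) = n * invol d" using e_eq by simp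
  qed
qed

lemma ca_cad:
  fixes d :: "'a::alt_star_algebra"
  assumes "d \<in> CA" "d \<noteq> 0"
  obtains n e where "cad d n e"
proof -
  obtain n e where h: "cen (d * invol d)" "invol d * d = d * invol d"
   "cen n" "n * (d * invol d) = 1" "(d * invol d) * n = 1" "invol n = n"
   "e = n * invol d" "d * e = 1" "e * d = 1" "invol d = (d * invol d) * e" "invol e = n * d"
    by (rule ca_facts[OF assms])
  have "cad d n e" using h by (unfold_locales) auto
  then show ?thesis by (rule that)
qed


lemma all_SA_zero:
  fixes p q J0 :: "'a::alt_star_algebra"
  assumes J0: "J0 \<in> SA" and b: "\<beta> \<noteq> 0"
  shows "(\<forall>I\<in>SA. p + \<beta> *\<^sub>R (I * q) = 0) \<longleftrightarrow> (p = 0 \<and> q = 0)"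
proof
  assume h: "\<forall>I\<in>SA. p + \<beta> *\<^sub>R (I * q) = 0"
  have 1: "p + \<beta> *\<^sub>R (J0 * q) = 0" using h J0 by blast
  have 2: "p + \<beta> *\<^sub>R ((- J0) * q) = 0" using h sa_neg[OF J0] by blast
  have "p + p = 0" using 1 2 by (simp add: algebra_simps)
  then have p0: "p = 0" by (rule rep_zero2)
  then have "J0 * q = 0" using 1 b by simp
  then have "q = 0" by (rule sa_cancel[OF J0])
  then show "p = 0 \<and> q = 0" using p0 by simp
qed simp

lemma alg_Nfc:
  fixes d v I0 :: "'a::alt_star_algebra"
  assumes I0: "I0 \<in> SA" and v: "v = - (\<beta> *\<^sub>R (I0 * d))"
  shows "invol v * v - (\<beta> * \<beta>) *\<^sub>R (invol d * d) = (\<beta> * \<beta>) *\<^sub>R (I0 * assoc d (invol d) I0)"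
    and "invol v * d + invol d * v = \<beta> *\<^sub>R assoc d (invol d) I0"
proof -
  have A: "assoc d (invol d) I0 = assoc (invol d) I0 d" by (rule assoc_cyc)
  have iv: "invol v = \<beta> *\<^sub>R (invol d * I0)" using v sa_invol[OF I0] by simp
  have X0: "(invol d * I0) * (I0 * d) = (invol d * (I0 * I0)) * d - I0 * assoc (invol d) I0 d" by (rule id_axxb)
  have X: "(invol d * I0) * (I0 * d) = - (invol d * d) - I0 * assoc (invol d) I0 d"
    using X0 sa_sq[OF I0] by (simp add: asa_one_right)
  have "invol v * v = - ((\<beta> * \<beta>) *\<^sub>R ((invol d * I0) * (I0 * d)))"
    using iv v by (simp add: asa_scaleR_left asa_scaleR_right)
  also have "\<dots> = (\<beta> * \<beta>) *\<^sub>R (invol d * d) + (\<beta> * \<beta>) *\<^sub>R (I0 * assoc (invol d) I0 d)"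
    unfolding X by (simp add: algebra_simps)
  finally show "invol v * v - (\<beta> * \<beta>) *\<^sub>R (invol d * d) = (\<beta> * \<beta>) *\<^sub>R (I0 * assoc d (invol d) I0)"
    using A by simp
  have "invol v * d + invol d * v = \<beta> *\<^sub>R ((invol d * I0) * d - invol d * (I0 * d))"
    using iv v by (simp add: asa_scaleR_left asa_scaleR_right algebra_simps)
  then show "invol v * d + invol d * v = \<beta> *\<^sub>R assoc d (invol d) I0"
    using A by (simp add: assoc_def)
qed

lemma alg_Nf:
  fixes d v I0 :: "'a::alt_star_algebra"
  assumes I0: "I0 \<in> SA" and v: "v = - (\<beta> *\<^sub>R (I0 * d))"
  shows "v * invol v - (\<beta> * \<beta>) *\<^sub>R (d * invol d) = - ((\<beta> * \<beta>) *\<^sub>R ((I0 * (d * invol d)) * I0 + d * invol d))"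
    and "v * invol d + d * invol v = \<beta> *\<^sub>R ((d * invol d) * I0 - I0 * (d * invol d) - 2 *\<^sub>R assoc d (invol d) I0)"
    and "(v * invol v - (\<beta> * \<beta>) *\<^sub>R (d * invol d)) + \<beta> *\<^sub>R (I0 * (v * invol d + d * invol v)) = - ((\<beta> * \<beta>) *\<^sub>R (I0 * assoc d (invol d) I0) + (\<beta> * \<beta>) *\<^sub>R (I0 * assoc d (invol d) I0))"
proof -
  define N where "N = d * invol d"
  define A where "A = assoc d (invol d) I0"
  have iv: "invol v = \<beta> *\<^sub>R (invol d * I0)" using v sa_invol[OF I0] by simp
  have MM: "(I0 * d) * (invol d * I0) = (I0 * N) * I0" unfolding N_def by (rule id_MM)
  show P1: "v * invol v - (\<beta> * \<beta>) *\<^sub>R (d * invol d) = - ((\<beta> * \<beta>) *\<^sub>R ((I0 * (d * invol d)) * I0 + d * invol d))"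
    using iv v MM unfolding N_def by (simp add: asa_scaleR_left asa_scaleR_right algebra_simps)
  have c1: "assoc I0 d (invol d) = A" unfolding A_def using assoc_cyc[of d "invol d" I0] assoc_cyc[of "invol d" I0 d] by simp
  have "(I0 * d) * invol d = I0 * N + assoc I0 d (invol d)" unfolding N_def by (simp add: assoc_def)
  then have e1: "(I0 * d) * invol d = I0 * N + A" using c1 by simp
  have e2: "d * (invol d * I0) = N * I0 - A" unfolding N_def A_def by (simp add: assoc_def)
  show P2: "v * invol d + d * invol v = \<beta> *\<^sub>R ((d * invol d) * I0 - I0 * (d * invol d) - 2 *\<^sub>R assoc d (invol d) I0)"
  proof -
    have "v * invol d + d * invol v = \<beta> *\<^sub>R (d * (invol d * I0) - (I0 * d) * invol d)"
      using iv v by (simp add: asa_scaleR_left asa_scaleR_right algebra_simps)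
    also have "\<dots> = \<beta> *\<^sub>R ((N * I0 - A) - (I0 * N + A))" unfolding e1 e2 ..
    finally show ?thesis unfolding N_def A_def by (simp add: algebra_simps scaleR_2)
  qed
  have f1: "I0 * (I0 * N) = - N" by (rule sa_JJz[OF I0])
  have f2: "(I0 * N) * I0 = I0 * (N * I0)" using asa_alt_xyx[of I0 N] by simp
  show "(v * invol v - (\<beta> * \<beta>) *\<^sub>R (d * invol d)) + \<beta> *\<^sub>R (I0 * (v * invol d + d * invol v)) = - ((\<beta> * \<beta>) *\<^sub>R (I0 * assoc d (invol d) I0) + (\<beta> * \<beta>) *\<^sub>R (I0 * assoc d (invol d) I0))"
    unfolding P1 P2 unfolding N_def[symmetric] A_def[symmetric]
    using f1 f2 by (simp add: asa_scaleR_right asa_ring algebra_simps scaleR_2)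
qed


lemma rl_add: "rl a + rl b = (rl (a + b) :: 'a::alt_star_algebra)"
  by (simp add: rl_def scaleR_add_left)

lemma rep_alpha:
  fixes J I :: "'a::alt_star_algebra"
  assumes J: "J \<in> SA" and I: "I \<in> SA" and eq: "rl \<alpha> + \<beta> *\<^sub>R J = rl \<alpha>' + \<beta>' *\<^sub>R I"
  shows "\<alpha>' = \<alpha> \<and> \<beta>' *\<^sub>R I = \<beta> *\<^sub>R J"
proof -
  have t: "trc (rl a + b *\<^sub>R K) = rl a + rl a" if "K \<in> SA" for a b and K :: 'a
    using sa_invol[OF that] by (simp add: trc_def algebra_simps)
  have "rl \<alpha> + rl \<alpha> = (rl \<alpha>' + rl \<alpha>' :: 'a)" using t[OF J, of \<alpha> \<beta>] t[OF I, of \<alpha>' \<beta>'] eq by simp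
  then have "rl (\<alpha> + \<alpha>) = (rl (\<alpha>' + \<alpha>') :: 'a)" by (simp add: rl_add)
  then have "\<alpha> + \<alpha> = \<alpha>' + \<alpha>'" by (rule rl_inj)
  then have a: "\<alpha>' = \<alpha>" by simp
  then show ?thesis using eq by simp
qed

lemma sq_SA: "I \<in> SA \<Longrightarrow> (b *\<^sub>R I) * (b *\<^sub>R I) = (rl (- (b * b)) :: 'a::alt_star_algebra)"
  using sa_sq[of I] by (simp add: asa_scaleR_left asa_scaleR_right rl_def)

lemma rep_beta:
  fixes J I :: "'a::alt_star_algebra"
  assumes J: "J \<in> SA" and I: "I \<in> SA" and eq: "\<beta>' *\<^sub>R I = \<beta> *\<^sub>R J"
  shows "(\<beta>' = \<beta> \<and> I = J) \<or> (\<beta>' = - \<beta> \<and> I = - J) \<or> (\<beta> = 0 \<and> \<beta>' = 0)"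
proof -
  have "rl (- (\<beta>' * \<beta>')) = (rl (- (\<beta> * \<beta>)) :: 'a)" using sq_SA[OF I, of \<beta>'] sq_SA[OF J, of \<beta>] eq by simp
  then have "\<beta>' * \<beta>' = \<beta> * \<beta>" using rl_inj by fastforce
  then have "\<beta>' = \<beta> \<or> \<beta>' = - \<beta>" by (metis minus_mult_minus square_eq_iff)
  then show ?thesis
  proof
    assume b: "\<beta>' = \<beta>"
    show ?thesis
    proof (cases "\<beta> = 0")
      case False
      then have "I = J" using eq b by simp
      then show ?thesis using b by simp
    qed (use b in simp)
  next
    assume b: "\<beta>' = - \<beta>"
    show ?thesis
    proof (cases "\<beta> = 0")
      case False
      have "\<beta> *\<^sub>R (- I) = \<beta> *\<^sub>R J" using eq b by simp
      then have "- I = J" using False by (metis scaleR_cancel_left)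
      then show ?thesis using b by auto
    qed (use b in simp)
  qed
qed

lemma stem_conj_stem: "stem D F \<Longrightarrow> stem D (stem_conj F)"
  by (simp add: stem_def stem_conj_def cinvol_def cbar_def)

lemma stem_prod_stem: "stem D F \<Longrightarrow> stem D G \<Longrightarrow> stem D (stem_prod F G)"
  by (simp add: stem_def stem_prod_def cmul_def cbar_def)

lemma stem_real: "stem D G \<Longrightarrow> Complex \<alpha> 0 \<in> D \<Longrightarrow> snd (G (Complex \<alpha> 0)) = 0"
proof -
  assume s: "stem D G" and z: "Complex \<alpha> 0 \<in> D"
  have "G (cnj (Complex \<alpha> 0)) = cbar (G (Complex \<alpha> 0))" using s z by (simp add: stem_def)
  then have "G (Complex \<alpha> 0) = cbar (G (Complex \<alpha> 0))" by (simp add: complex_cnj)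
  then have "snd (G (Complex \<alpha> 0)) = - snd (G (Complex \<alpha> 0))" by (metis cbar_def snd_conv)
  then have "snd (G (Complex \<alpha> 0)) + snd (G (Complex \<alpha> 0)) = 0" by (simp add: eq_neg_iff_add_eq_0)
  then show ?thesis by (rule rep_zero2)
qed

lemma slice_eval:
  fixes J :: "'a::alt_star_algebra"
  assumes s: "stem D G" and J: "J \<in> SA" and z: "Complex \<alpha> \<beta> \<in> D"
  shows "sliceI D G (rl \<alpha> + \<beta> *\<^sub>R J) = fst (G (Complex \<alpha> \<beta>)) + J * snd (G (Complex \<alpha> \<beta>))"
  unfolding sliceI_def
proof (rule some_equality)
  show "\<exists>\<alpha>' \<beta>' J'. J' \<in> SA \<and> Complex \<alpha>' \<beta>' \<in> D \<and> rl \<alpha> + \<beta> *\<^sub>R J = rl \<alpha>' + \<beta>' *\<^sub>R J' \<and>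
          fst (G (Complex \<alpha> \<beta>)) + J * snd (G (Complex \<alpha> \<beta>)) = fst (G (Complex \<alpha>' \<beta>')) + J' * snd (G (Complex \<alpha>' \<beta>'))"
    using J z by blast
next
  fix w assume "\<exists>\<alpha>' \<beta>' J'. J' \<in> SA \<and> Complex \<alpha>' \<beta>' \<in> D \<and> rl \<alpha> + \<beta> *\<^sub>R J = rl \<alpha>' + \<beta>' *\<^sub>R J' \<and>
          w = fst (G (Complex \<alpha>' \<beta>')) + J' * snd (G (Complex \<alpha>' \<beta>'))"
  then obtain \<alpha>' \<beta>' J' where J': "J' \<in> SA" and z': "Complex \<alpha>' \<beta>' \<in> D"
    and eq: "rl \<alpha> + \<beta> *\<^sub>R J = rl \<alpha>' + \<beta>' *\<^sub>R J'"
    and w: "w = fst (G (Complex \<alpha>' \<beta>')) + J' * snd (G (Complex \<alpha>' \<beta>'))" by blast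
  from rep_alpha[OF J J' eq] have a: "\<alpha>' = \<alpha>" and bb: "\<beta>' *\<^sub>R J' = \<beta> *\<^sub>R J" by auto
  from rep_beta[OF J J' bb] consider "\<beta>' = \<beta> \<and> J' = J" | "\<beta>' = - \<beta> \<and> J' = - J" | "\<beta> = 0 \<and> \<beta>' = 0" by blast
  then show "w = fst (G (Complex \<alpha> \<beta>)) + J * snd (G (Complex \<alpha> \<beta>))"
  proof cases
    case 1 then show ?thesis using w a by simp
  next
    case 2
    have "G (cnj (Complex \<alpha> \<beta>)) = cbar (G (Complex \<alpha> \<beta>))" using s z by (simp add: stem_def)
    then have "G (Complex \<alpha> (- \<beta>)) = cbar (G (Complex \<alpha> \<beta>))" by (simp add: complex_cnj)
    then show ?thesis using w a 2 by (simp add: cbar_def)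
  next
    case 3
    then show ?thesis using w a stem_real[OF s] z by simp
  qed
qed


lemma assoc_rl_pt: "assoc a b (rl \<alpha> + \<beta> *\<^sub>R I) = \<beta> *\<^sub>R assoc a b (I::'a::alt_star_algebra)"
  using nuc3[OF rl_nucleus, of a b \<alpha>] by (simp add: assoc_add3 assoc_scale3)

lemma re_pt: "I \<in> SA \<Longrightarrow> re_el (rl \<alpha> + \<beta> *\<^sub>R I) = (rl \<alpha> :: 'a::alt_star_algebra)"
  using sa_invol[of I] by (simp add: re_el_def trc_def algebra_simps rl_add scaleR_2[symmetric] rl_def)

lemma im_pt: "I \<in> SA \<Longrightarrow> im_el (rl \<alpha> + \<beta> *\<^sub>R I) = \<beta> *\<^sub>R (I :: 'a::alt_star_algebra)"
  using re_pt[of I \<alpha> \<beta>] by (simp add: im_el_def)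

lemma invol_pt: "I \<in> SA \<Longrightarrow> invol (rl \<alpha> + \<beta> *\<^sub>R I) = rl \<alpha> + \<beta> *\<^sub>R (- I :: 'a::alt_star_algebra)"
  using sa_invol[of I] by simp

locale nr =
  fixes \<alpha> \<beta> :: real and J0 v d x :: "'a::alt_star_algebra" and f fc Nf Nfc :: "'a \<Rightarrow> 'a" and \<Omega> S :: "'a set"
  assumes b: "\<beta> \<noteq> 0" and J0: "J0 \<in> SA" and S: "S = (\<lambda>I. rl \<alpha> + \<beta> *\<^sub>R I) ` SA" and S\<Omega>: "S \<subseteq> \<Omega>"
    and ef: "I \<in> SA \<Longrightarrow> f (rl \<alpha> + \<beta> *\<^sub>R I) = v + \<beta> *\<^sub>R (I * d)"
    and efc: "I \<in> SA \<Longrightarrow> fc (rl \<alpha> + \<beta> *\<^sub>R I) = invol v + \<beta> *\<^sub>R (I * invol d)"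
    and eN: "I \<in> SA \<Longrightarrow> Nf (rl \<alpha> + \<beta> *\<^sub>R I) = (v * invol v - (\<beta> * \<beta>) *\<^sub>R (d * invol d)) + \<beta> *\<^sub>R (I * (v * invol d + d * invol v))"
    and eNc: "I \<in> SA \<Longrightarrow> Nfc (rl \<alpha> + \<beta> *\<^sub>R I) = (invol v * v - (\<beta> * \<beta>) *\<^sub>R (invol d * d)) + \<beta> *\<^sub>R (I * (invol v * d + invol d * v))"
    and rex: "re_el x = rl \<alpha>"
begin

abbreviation g :: "'a \<Rightarrow> 'a" where "g I \<equiv> rl \<alpha> + \<beta> *\<^sub>R I"

lemma g_inj: "g I = g I' \<Longrightarrow> I = I'"
  using b by simp

lemma gS: "I \<in> SA \<Longrightarrow> g I \<in> S" using S by blast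
lemma g\<Omega>: "I \<in> SA \<Longrightarrow> g I \<in> \<Omega>" using S\<Omega> gS by blast

lemma memS: "y \<in> S \<longleftrightarrow> (\<exists>I\<in>SA. y = g I)" using S by blast

lemma inV: "I \<in> SA \<Longrightarrow> g I \<in> Vz \<Omega> h \<longleftrightarrow> h (g I) = 0"
  using g\<Omega> by (simp add: Vz_def)

lemma subV: "S \<subseteq> Vz \<Omega> h \<longleftrightarrow> (\<forall>I\<in>SA. h (g I) = 0)"
  using S inV by auto

lemma emptyV: "S \<inter> Vz \<Omega> h = {} \<longleftrightarrow> (\<forall>I\<in>SA. h (g I) \<noteq> 0)"
  using S inV by auto

lemma meetV: "S \<inter> Vz \<Omega> h = g ` {I \<in> SA. h (g I) = 0}"
  using S inV by auto


lemma part1: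
  "d = 0 \<longrightarrow>
      (S \<subseteq> Vz \<Omega> f \<and> S \<subseteq> Vz \<Omega> fc \<and> S \<subseteq> Vz \<Omega> Nf \<and> S \<subseteq> Vz \<Omega> Nfc) \<or>
      (S \<inter> Vz \<Omega> f = {} \<and> S \<inter> Vz \<Omega> fc = {} \<and>
         ((S \<inter> Vz \<Omega> Nf = {} \<and> S \<inter> Vz \<Omega> Nfc = {}) \<or>
          (singular TYPE('a) \<and> (nz_null v \<or> nz_null (invol v)))))"
proof
  assume d0: "d = 0"
  have vf: "I \<in> SA \<Longrightarrow> f (g I) = v" for I using ef d0 by simp
  have vfc: "I \<in> SA \<Longrightarrow> fc (g I) = invol v" for I using efc d0 by simp
  have vN: "I \<in> SA \<Longrightarrow> Nf (g I) = v * invol v" for I using eN d0 by simp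
  have vNc: "I \<in> SA \<Longrightarrow> Nfc (g I) = invol v * v" for I using eNc d0 by simp
  show "(S \<subseteq> Vz \<Omega> f \<and> S \<subseteq> Vz \<Omega> fc \<and> S \<subseteq> Vz \<Omega> Nf \<and> S \<subseteq> Vz \<Omega> Nfc) \<or>
      (S \<inter> Vz \<Omega> f = {} \<and> S \<inter> Vz \<Omega> fc = {} \<and>
         ((S \<inter> Vz \<Omega> Nf = {} \<and> S \<inter> Vz \<Omega> Nfc = {}) \<or>
          (singular TYPE('a) \<and> (nz_null v \<or> nz_null (invol v)))))"
  proof (cases "v = 0")
    case True
    then show ?thesis using vf vfc vN vNc by (simp add: subV)
  next
    case False
    have iv: "invol v \<noteq> 0" using False by (metis invol_0 invol_invol)
    have 1: "S \<inter> Vz \<Omega> f = {}" using vf False by (simp add: emptyV)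
    have 2: "S \<inter> Vz \<Omega> fc = {}" using vfc iv by (simp add: emptyV)
    have 3: "(S \<inter> Vz \<Omega> Nf = {} \<and> S \<inter> Vz \<Omega> Nfc = {}) \<or>
          (singular TYPE('a) \<and> (nz_null v \<or> nz_null (invol v)))"
    proof (cases "v * invol v = 0 \<or> invol v * v = 0")
      case True
      then have "nz_null v \<or> nz_null (invol v)" using False iv by (auto simp: nz_null_def nrm_def)
      moreover then have "singular TYPE('a)" unfolding singular_def nz_null_def by blast
      ultimately show ?thesis by simp
    next
      case False
      then show ?thesis using vN vNc by (simp add: emptyV)
    qed
    show ?thesis using 1 2 3 by simp
  qed
qed

lemma zero_facts:
  assumes I0: "I0 \<in> SA" and z: "v + \<beta> *\<^sub>R (I0 * d) = 0"
  shows "v = - (\<beta> *\<^sub>R (I0 * d))"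
    and "I \<in> SA \<Longrightarrow> f (g I) = 0 \<longleftrightarrow> (im_el (g I) - im_el (g I0)) * d = 0"
    and "invol (g I0) \<in> Vz \<Omega> Nfc"
    and "assoc d (invol d) (g I0) = 0 \<longleftrightarrow> S \<subseteq> Vz \<Omega> Nfc"
    and "assoc d (invol d) (g I0) = 0 \<longleftrightarrow> g I0 \<in> Vz \<Omega> Nf"
    and "assoc d (invol d) (g I0) = 0 \<longrightarrow> (S \<subseteq> Vz \<Omega> Nf \<longleftrightarrow> comm (nrm d) (g I0) = 0)"
proof -
  show hv: "v = - (\<beta> *\<^sub>R (I0 * d))" using z by (simp add: eq_neg_iff_add_eq_0)
  define A where "A = assoc d (invol d) I0"
  define N where "N = d * invol d"
  have AY: "assoc d (invol d) (g I0) = \<beta> *\<^sub>R A" unfolding A_def by (rule assoc_rl_pt)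
  have AY0: "assoc d (invol d) (g I0) = 0 \<longleftrightarrow> A = 0" using AY b by simp
  have Q1: "invol v * v - (\<beta> * \<beta>) *\<^sub>R (invol d * d) = (\<beta> * \<beta>) *\<^sub>R (I0 * A)"
    unfolding A_def by (rule alg_Nfc(1)[OF I0 hv])
  have Q2: "invol v * d + invol d * v = \<beta> *\<^sub>R A"
    unfolding A_def by (rule alg_Nfc(2)[OF I0 hv])
  have P1: "v * invol v - (\<beta> * \<beta>) *\<^sub>R (d * invol d) = - ((\<beta> * \<beta>) *\<^sub>R ((I0 * N) * I0 + N))"
    unfolding N_def by (rule alg_Nf(1)[OF I0 hv])
  have P2: "v * invol d + d * invol v = \<beta> *\<^sub>R (N * I0 - I0 * N - 2 *\<^sub>R A)"
    unfolding N_def A_def by (rule alg_Nf(2)[OF I0 hv])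
  have NI0: "(v * invol v - (\<beta> * \<beta>) *\<^sub>R (d * invol d)) + \<beta> *\<^sub>R (I0 * (v * invol d + d * invol v)) = - ((\<beta> * \<beta>) *\<^sub>R (I0 * A) + (\<beta> * \<beta>) *\<^sub>R (I0 * A))"
    unfolding A_def by (rule alg_Nf(3)[OF I0 hv])
  show "I \<in> SA \<Longrightarrow> f (g I) = 0 \<longleftrightarrow> (im_el (g I) - im_el (g I0)) * d = 0"
  proof -
    assume I: "I \<in> SA"
    have "(im_el (g I) - im_el (g I0)) * d = \<beta> *\<^sub>R (I * d) - \<beta> *\<^sub>R (I0 * d)"
      using im_pt[OF I] im_pt[OF I0] by (simp add: asa_diff_left asa_scaleR_left)
    also have "\<dots> = f (g I)" using ef[OF I] hv by simp
    finally show ?thesis by simp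
  qed
  show "invol (g I0) \<in> Vz \<Omega> Nfc"
  proof -
    have mI: "- I0 \<in> SA" by (rule sa_neg[OF I0])
    have "Nfc (g (- I0)) = (\<beta> * \<beta>) *\<^sub>R (I0 * A) + \<beta> *\<^sub>R ((- I0) * (\<beta> *\<^sub>R A))"
      using eNc[OF mI] Q1 Q2 by simp
    also have "\<dots> = 0" by (simp add: asa_scaleR_right)
    finally have "g (- I0) \<in> Vz \<Omega> Nfc" using inV[OF mI] by simp
    then show ?thesis using invol_pt[OF I0] by simp
  qed
  show "assoc d (invol d) (g I0) = 0 \<longleftrightarrow> S \<subseteq> Vz \<Omega> Nfc"
  proof -
    have "S \<subseteq> Vz \<Omega> Nfc \<longleftrightarrow> (\<forall>I\<in>SA. (invol v * v - (\<beta> * \<beta>) *\<^sub>R (invol d * d)) + \<beta> *\<^sub>R (I * (invol v * d + invol d * v)) = 0)"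
      using eNc by (simp add: subV)
    also have "\<dots> \<longleftrightarrow> (invol v * v - (\<beta> * \<beta>) *\<^sub>R (invol d * d)) = 0 \<and> (invol v * d + invol d * v) = 0"
      by (rule all_SA_zero[OF J0 b])
    also have "\<dots> \<longleftrightarrow> A = 0" unfolding Q1 Q2 using b by auto
    finally show ?thesis using AY0 by simp
  qed
  show "assoc d (invol d) (g I0) = 0 \<longleftrightarrow> g I0 \<in> Vz \<Omega> Nf"
  proof -
    have e: "Nf (g I0) = - ((\<beta> * \<beta>) *\<^sub>R (I0 * A) + (\<beta> * \<beta>) *\<^sub>R (I0 * A))"
      using eN[OF I0] NI0 by (simp only:)
    have "g I0 \<in> Vz \<Omega> Nf \<longleftrightarrow> Nf (g I0) = 0" by (rule inV[OF I0])
    also have "\<dots> \<longleftrightarrow> (\<beta> * \<beta>) *\<^sub>R (I0 * A) + (\<beta> * \<beta>) *\<^sub>R (I0 * A) = 0"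
      unfolding e by (rule neg_equal_0_iff_equal)
    also have "\<dots> \<longleftrightarrow> A = 0"
    proof
      assume "(\<beta> * \<beta>) *\<^sub>R (I0 * A) + (\<beta> * \<beta>) *\<^sub>R (I0 * A) = 0"
      then have "(\<beta> * \<beta>) *\<^sub>R (I0 * A) = 0" by (rule rep_zero2)
      then have "I0 * A = 0" using b by simp
      then show "A = 0" by (rule sa_cancel[OF I0])
    qed simp
    finally show ?thesis using AY0 by simp
  qed
  show "assoc d (invol d) (g I0) = 0 \<longrightarrow> (S \<subseteq> Vz \<Omega> Nf \<longleftrightarrow> comm (nrm d) (g I0) = 0)"
  proof
    assume "assoc d (invol d) (g I0) = 0"
    then have A0: "A = 0" using AY0 by simp
    have cm: "comm (nrm d) (g I0) = \<beta> *\<^sub>R (N * I0 - I0 * N)"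
      unfolding comm_def nrm_def N_def by (simp add: asa_ring algebra_simps)
    have "S \<subseteq> Vz \<Omega> Nf \<longleftrightarrow> (\<forall>I\<in>SA. (v * invol v - (\<beta> * \<beta>) *\<^sub>R (d * invol d)) + \<beta> *\<^sub>R (I * (v * invol d + d * invol v)) = 0)"
      using eN by (simp add: subV)
    also have "\<dots> \<longleftrightarrow> (v * invol v - (\<beta> * \<beta>) *\<^sub>R (d * invol d)) = 0 \<and> (v * invol d + d * invol v) = 0"
      by (rule all_SA_zero[OF J0 b])
    also have "\<dots> \<longleftrightarrow> N * I0 - I0 * N = 0"
    proof
      assume "(v * invol v - (\<beta> * \<beta>) *\<^sub>R (d * invol d)) = 0 \<and> (v * invol d + d * invol v) = 0"
      then show "N * I0 - I0 * N = 0" using P2 A0 b by simp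
    next
      assume c: "N * I0 - I0 * N = 0"
      then have "I0 * N = N * I0" by simp
      then have "(I0 * N) * I0 = (N * I0) * I0" by simp
      also have "\<dots> = N * (I0 * I0)" using asa_alt_yxx[of N I0] by simp
      also have "\<dots> = - N" using sa_sq[OF I0] by (simp add: asa_one_right)
      finally have "(I0 * N) * I0 + N = 0" by simp
      then show "(v * invol v - (\<beta> * \<beta>) *\<^sub>R (d * invol d)) = 0 \<and> (v * invol d + d * invol v) = 0"
        using P1 P2 A0 c by simp
    qed
    finally show "S \<subseteq> Vz \<Omega> Nf \<longleftrightarrow> comm (nrm d) (g I0) = 0" using cm b by simp
  qed
qed


lemma part2:
  "right_zero_divisor d \<longrightarrow>
     (S \<inter> Vz \<Omega> f \<noteq> {} \<and>
       (\<forall>y \<in> S \<inter> Vz \<Omega> f.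
          S \<inter> Vz \<Omega> f = {y' \<in> S. (im_el y' - im_el y) * d = 0} \<and>
          invol y \<notin> Vz \<Omega> f \<and> invol y \<in> Vz \<Omega> Nfc \<and>
          (assoc d (invol d) y = 0 \<longleftrightarrow> S \<subseteq> Vz \<Omega> Nfc) \<and>
          (assoc d (invol d) y = 0 \<longleftrightarrow> y \<in> Vz \<Omega> Nf) \<and>
          (assoc d (invol d) y = 0 \<longrightarrow> (S \<subseteq> Vz \<Omega> Nf \<longleftrightarrow> comm (nrm d) y = 0)))) \<or>
     S \<inter> Vz \<Omega> f = {}"
proof
  assume rzd: "right_zero_divisor d"
  then have dnz: "d \<noteq> 0" by (simp add: right_zero_divisor_def)
  show "(S \<inter> Vz \<Omega> f \<noteq> {} \<and>
       (\<forall>y \<in> S \<inter> Vz \<Omega> f.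
          S \<inter> Vz \<Omega> f = {y' \<in> S. (im_el y' - im_el y) * d = 0} \<and>
          invol y \<notin> Vz \<Omega> f \<and> invol y \<in> Vz \<Omega> Nfc \<and>
          (assoc d (invol d) y = 0 \<longleftrightarrow> S \<subseteq> Vz \<Omega> Nfc) \<and>
          (assoc d (invol d) y = 0 \<longleftrightarrow> y \<in> Vz \<Omega> Nf) \<and>
          (assoc d (invol d) y = 0 \<longrightarrow> (S \<subseteq> Vz \<Omega> Nf \<longleftrightarrow> comm (nrm d) y = 0)))) \<or>
     S \<inter> Vz \<Omega> f = {}"
  proof (cases "S \<inter> Vz \<Omega> f = {}")
    case True then show ?thesis by simp
  next
    case False
    have "\<forall>y \<in> S \<inter> Vz \<Omega> f.
          S \<inter> Vz \<Omega> f = {y' \<in> S. (im_el y' - im_el y) * d = 0} \<and>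
          invol y \<notin> Vz \<Omega> f \<and> invol y \<in> Vz \<Omega> Nfc \<and>
          (assoc d (invol d) y = 0 \<longleftrightarrow> S \<subseteq> Vz \<Omega> Nfc) \<and>
          (assoc d (invol d) y = 0 \<longleftrightarrow> y \<in> Vz \<Omega> Nf) \<and>
          (assoc d (invol d) y = 0 \<longrightarrow> (S \<subseteq> Vz \<Omega> Nf \<longleftrightarrow> comm (nrm d) y = 0))"
    proof
      fix y assume y: "y \<in> S \<inter> Vz \<Omega> f"
      then obtain I0 where I0: "I0 \<in> SA" and yI: "y = g I0" using memS by blast
      have fz: "f (g I0) = 0" using y yI by (simp add: Vz_def)
      then have z: "v + \<beta> *\<^sub>R (I0 * d) = 0" using ef[OF I0] by simp
      note Z = zero_facts[OF I0 z]
      have set: "S \<inter> Vz \<Omega> f = {y' \<in> S. (im_el y' - im_el y) * d = 0}"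
      proof (rule set_eqI)
        fix y' show "y' \<in> S \<inter> Vz \<Omega> f \<longleftrightarrow> y' \<in> {y' \<in> S. (im_el y' - im_el y) * d = 0}"
        proof (cases "y' \<in> S")
          case True
          then obtain I where I: "I \<in> SA" and y'I: "y' = g I" using memS by blast
          show ?thesis using True y'I yI Z(2)[OF I] inV[OF I] by simp
        qed simp
      qed
      have ninv: "invol y \<notin> Vz \<Omega> f"
      proof
        assume "invol y \<in> Vz \<Omega> f"
        then have "f (g (- I0)) = 0" using invol_pt[OF I0] yI by (simp add: Vz_def)
        then have h1: "v + \<beta> *\<^sub>R ((- I0) * d) = 0" using ef[OF sa_neg[OF I0]] by simp
        have "\<beta> *\<^sub>R (I0 * d) + \<beta> *\<^sub>R (I0 * d) = (v + \<beta> *\<^sub>R (I0 * d)) - (v + \<beta> *\<^sub>R ((- I0) * d))"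
          by (simp add: algebra_simps)
        also have "\<dots> = 0" by (simp only: z h1 diff_self)
        finally have "\<beta> *\<^sub>R (I0 * d) + \<beta> *\<^sub>R (I0 * d) = 0" .
        then have "\<beta> *\<^sub>R (I0 * d) = 0" by (rule rep_zero2)
        then have "I0 * d = 0" using b by simp
        then have "d = 0" by (rule sa_cancel[OF I0])
        then show False using dnz by simp
      qed
      show "S \<inter> Vz \<Omega> f = {y' \<in> S. (im_el y' - im_el y) * d = 0} \<and>
          invol y \<notin> Vz \<Omega> f \<and> invol y \<in> Vz \<Omega> Nfc \<and>
          (assoc d (invol d) y = 0 \<longleftrightarrow> S \<subseteq> Vz \<Omega> Nfc) \<and>
          (assoc d (invol d) y = 0 \<longleftrightarrow> y \<in> Vz \<Omega> Nf) \<and>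
          (assoc d (invol d) y = 0 \<longrightarrow> (S \<subseteq> Vz \<Omega> Nf \<longleftrightarrow> comm (nrm d) y = 0))"
        using set ninv Z(3-6) yI by simp
    qed
    then show ?thesis using False by blast
  qed
qed

lemma part3:
  "d \<noteq> 0 \<and> \<not> right_zero_divisor d \<longrightarrow>
     (\<exists>y. S \<inter> Vz \<Omega> f = {y} \<and> invol y \<in> Vz \<Omega> Nfc \<and>
         (invertible d \<longrightarrow> y = re_el x - v * inv_el d) \<and>
         (assoc d (invol d) y = 0 \<longleftrightarrow> S \<subseteq> Vz \<Omega> Nfc) \<and>
         (assoc d (invol d) y = 0 \<longleftrightarrow> y \<in> Vz \<Omega> Nf) \<and>
         (assoc d (invol d) y = 0 \<longrightarrow> (S \<subseteq> Vz \<Omega> Nf \<longleftrightarrow> comm (nrm d) y = 0)) \<and>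
         (d \<in> CA - {0} \<longrightarrow>
            S \<subseteq> Vz \<Omega> Nf \<and> S \<subseteq> Vz \<Omega> Nfc \<and>
            S \<inter> Vz \<Omega> fc = {(inv_el d * invol y) * d})) \<or>
     (S \<inter> Vz \<Omega> f = {} \<and>
        (d \<in> CA - {0} \<longrightarrow>
           S \<inter> Vz \<Omega> fc = {} \<and> \<not> (S \<subseteq> Vz \<Omega> Nf \<and> S \<subseteq> Vz \<Omega> Nfc) \<and>
           (v \<in> CA - {0} \<or> compatible TYPE('a) \<longrightarrow>
              \<not> S \<subseteq> Vz \<Omega> Nf \<and> \<not> S \<subseteq> Vz \<Omega> Nfc)))"
proof
  assume h: "d \<noteq> 0 \<and> \<not> right_zero_divisor d"
  then have dnz: "d \<noteq> 0" and nz: "\<And>c. c * d = 0 \<Longrightarrow> c = 0" by (auto simp: right_zero_divisor_def)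
  show "(\<exists>y. S \<inter> Vz \<Omega> f = {y} \<and> invol y \<in> Vz \<Omega> Nfc \<and>
         (invertible d \<longrightarrow> y = re_el x - v * inv_el d) \<and>
         (assoc d (invol d) y = 0 \<longleftrightarrow> S \<subseteq> Vz \<Omega> Nfc) \<and>
         (assoc d (invol d) y = 0 \<longleftrightarrow> y \<in> Vz \<Omega> Nf) \<and>
         (assoc d (invol d) y = 0 \<longrightarrow> (S \<subseteq> Vz \<Omega> Nf \<longleftrightarrow> comm (nrm d) y = 0)) \<and>
         (d \<in> CA - {0} \<longrightarrow>
            S \<subseteq> Vz \<Omega> Nf \<and> S \<subseteq> Vz \<Omega> Nfc \<and>
            S \<inter> Vz \<Omega> fc = {(inv_el d * invol y) * d})) \<or>
     (S \<inter> Vz \<Omega> f = {} \<and>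
        (d \<in> CA - {0} \<longrightarrow>
           S \<inter> Vz \<Omega> fc = {} \<and> \<not> (S \<subseteq> Vz \<Omega> Nf \<and> S \<subseteq> Vz \<Omega> Nfc) \<and>
           (v \<in> CA - {0} \<or> compatible TYPE('a) \<longrightarrow>
              \<not> S \<subseteq> Vz \<Omega> Nf \<and> \<not> S \<subseteq> Vz \<Omega> Nfc)))"
  proof (cases "\<exists>I0\<in>SA. v + \<beta> *\<^sub>R (I0 * d) = 0")
    case True
    then obtain I0 where I0: "I0 \<in> SA" and z: "v + \<beta> *\<^sub>R (I0 * d) = 0" by blast
    note Z = zero_facts[OF I0 z]
    define y where "y = g I0"
    have single: "S \<inter> Vz \<Omega> f = {y}"
    proof (rule set_eqI)
      fix y' show "y' \<in> S \<inter> Vz \<Omega> f \<longleftrightarrow> y' \<in> {y}"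
      proof
        assume y': "y' \<in> S \<inter> Vz \<Omega> f"
        then obtain I where I: "I \<in> SA" and y'I: "y' = g I" using memS by blast
        have "f (g I) = 0" using y' y'I by (simp add: Vz_def)
        then have "v + \<beta> *\<^sub>R (I * d) = 0" using ef[OF I] by simp
        then have h1: "v + \<beta> *\<^sub>R (I * d) = 0" .
        have "\<beta> *\<^sub>R ((I - I0) * d) = (v + \<beta> *\<^sub>R (I * d)) - (v + \<beta> *\<^sub>R (I0 * d))"
          by (simp add: asa_diff_left algebra_simps)
        also have "\<dots> = 0" by (simp only: z h1 diff_self)
        finally have "\<beta> *\<^sub>R ((I - I0) * d) = 0" .
        then have "(I - I0) * d = 0" using b by simp
        then have "I - I0 = 0" by (rule nz)
        then show "y' \<in> {y}" using y'I y_def by simp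
      next
        assume "y' \<in> {y}"
        then show "y' \<in> S \<inter> Vz \<Omega> f" using y_def gS[OF I0] inV[OF I0] ef[OF I0] z by simp
      qed
    qed
    have inv: "invertible d \<longrightarrow> y = re_el x - v * inv_el d"
    proof
      assume "invertible d"
      then obtain e where de: "d * e = 1" and ed: "e * d = 1" by (auto simp: invertible_def)
      have ie: "inv_el d = e" by (rule inv_el_eq[OF de ed])
      have "(I0 * d) * e = I0" using inv_prop_all(4)[OF de ed, of I0] de by (simp add: assoc_def asa_one_right)
      then have "v * e = - (\<beta> *\<^sub>R I0)" using Z(1) by (simp add: asa_scaleR_left)
      then show "y = re_el x - v * inv_el d" using ie rex y_def by simp
    qed
    have ca: "d \<in> CA - {0} \<longrightarrow>
            S \<subseteq> Vz \<Omega> Nf \<and> S \<subseteq> Vz \<Omega> Nfc \<and>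
            S \<inter> Vz \<Omega> fc = {(inv_el d * invol y) * d}"
    proof
      assume dCA: "d \<in> CA - {0}"
      obtain n e where c: "cad d n e" using ca_cad[of d] dCA by blast
      interpret cad d n e by (rule c)
      have A0: "assoc d (invol d) y = 0" using A_zero by simp
      have cm: "comm (nrm d) y = 0" using cen_comm[OF cN, of y] by (simp add: comm_def nrm_def)
      have s1: "S \<subseteq> Vz \<Omega> Nf" using Z(6) A0 cm y_def by simp
      have s2: "S \<subseteq> Vz \<Omega> Nfc" using Z(4) A0 y_def by simp
      define K where "K = (e * I0) * d"
      have mK: "- K \<in> SA" unfolding K_def by (rule sa_neg[OF K1_SA[OF I0]])
      have ie: "inv_el d = e" by (rule inv_el_eq[OF de ed])
      have pt: "(inv_el d * invol y) * d = g (- K)"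
      proof -
        have "invol y = rl \<alpha> + \<beta> *\<^sub>R (- I0)" using invol_pt[OF I0] y_def by simp
        then have "e * invol y = \<alpha> *\<^sub>R e - \<beta> *\<^sub>R (e * I0)" by (simp add: asa_ring)
        then have "(e * invol y) * d = \<alpha> *\<^sub>R (e * d) - \<beta> *\<^sub>R ((e * I0) * d)" by (simp add: asa_ring)
        then show ?thesis using ie ed unfolding K_def by (simp add: rl_def)
      qed
      have s3: "S \<inter> Vz \<Omega> fc = {(inv_el d * invol y) * d}"
      proof (rule set_eqI)
        fix y' show "y' \<in> S \<inter> Vz \<Omega> fc \<longleftrightarrow> y' \<in> {(inv_el d * invol y) * d}"
        proof
          assume y': "y' \<in> S \<inter> Vz \<Omega> fc"
          then obtain I where I: "I \<in> SA" and y'I: "y' = g I" using memS by blast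
          have "fc (g I) = 0" using y' y'I by (simp add: Vz_def)
          then have "invol v + \<beta> *\<^sub>R (I * invol d) = 0" using efc[OF I] by simp
          then have "I = - K" unfolding K_def by (rule fc_unique[OF b I0 Z(1)])
          then show "y' \<in> {(inv_el d * invol y) * d}" using y'I pt by simp
        next
          assume "y' \<in> {(inv_el d * invol y) * d}"
          then have y'K: "y' = g (- K)" using pt by simp
          have "invol v + \<beta> *\<^sub>R ((- K) * invol d) = 0" unfolding K_def by (rule fc_point[OF I0 Z(1)])
          then show "y' \<in> S \<inter> Vz \<Omega> fc" using y'K gS[OF mK] inV[OF mK] efc[OF mK] by simp
        qed
      qed
      show "S \<subseteq> Vz \<Omega> Nf \<and> S \<subseteq> Vz \<Omega> Nfc \<and> S \<inter> Vz \<Omega> fc = {(inv_el d * invol y) * d}"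
        using s1 s2 s3 by simp
    qed
    have "S \<inter> Vz \<Omega> f = {y} \<and> invol y \<in> Vz \<Omega> Nfc \<and>
         (invertible d \<longrightarrow> y = re_el x - v * inv_el d) \<and>
         (assoc d (invol d) y = 0 \<longleftrightarrow> S \<subseteq> Vz \<Omega> Nfc) \<and>
         (assoc d (invol d) y = 0 \<longleftrightarrow> y \<in> Vz \<Omega> Nf) \<and>
         (assoc d (invol d) y = 0 \<longrightarrow> (S \<subseteq> Vz \<Omega> Nf \<longleftrightarrow> comm (nrm d) y = 0)) \<and>
         (d \<in> CA - {0} \<longrightarrow>
            S \<subseteq> Vz \<Omega> Nf \<and> S \<subseteq> Vz \<Omega> Nfc \<and>
            S \<inter> Vz \<Omega> fc = {(inv_el d * invol y) * d})"
    proof (intro conjI)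
      show "S \<inter> Vz \<Omega> f = {y}" by (rule single)
      show "invol y \<in> Vz \<Omega> Nfc" unfolding y_def by (rule Z(3))
      show "invertible d \<longrightarrow> y = re_el x - v * inv_el d" by (rule inv)
      show "(assoc d (invol d) y = 0 \<longleftrightarrow> S \<subseteq> Vz \<Omega> Nfc)" unfolding y_def by (rule Z(4))
      show "(assoc d (invol d) y = 0 \<longleftrightarrow> y \<in> Vz \<Omega> Nf)" unfolding y_def by (rule Z(5))
      show "(assoc d (invol d) y = 0 \<longrightarrow> (S \<subseteq> Vz \<Omega> Nf \<longleftrightarrow> comm (nrm d) y = 0))" unfolding y_def by (rule Z(6))
      show "d \<in> CA - {0} \<longrightarrow>
            S \<subseteq> Vz \<Omega> Nf \<and> S \<subseteq> Vz \<Omega> Nfc \<and>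
            S \<inter> Vz \<Omega> fc = {(inv_el d * invol y) * d}" by (rule ca)
    qed
    then have "\<exists>y. S \<inter> Vz \<Omega> f = {y} \<and> invol y \<in> Vz \<Omega> Nfc \<and>
         (invertible d \<longrightarrow> y = re_el x - v * inv_el d) \<and>
         (assoc d (invol d) y = 0 \<longleftrightarrow> S \<subseteq> Vz \<Omega> Nfc) \<and>
         (assoc d (invol d) y = 0 \<longleftrightarrow> y \<in> Vz \<Omega> Nf) \<and>
         (assoc d (invol d) y = 0 \<longrightarrow> (S \<subseteq> Vz \<Omega> Nf \<longleftrightarrow> comm (nrm d) y = 0)) \<and>
         (d \<in> CA - {0} \<longrightarrow>
            S \<subseteq> Vz \<Omega> Nf \<and> S \<subseteq> Vz \<Omega> Nfc \<and>
            S \<inter> Vz \<Omega> fc = {(inv_el d * invol y) * d})" by (rule exI)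
    then show ?thesis by (rule disjI1)
  next
    case False
    then have nof: "\<And>I. I \<in> SA \<Longrightarrow> v + \<beta> *\<^sub>R (I * d) \<noteq> 0" by blast
    have e1: "S \<inter> Vz \<Omega> f = {}" using nof ef by (simp add: emptyV)
    have ca: "d \<in> CA - {0} \<longrightarrow>
           S \<inter> Vz \<Omega> fc = {} \<and> \<not> (S \<subseteq> Vz \<Omega> Nf \<and> S \<subseteq> Vz \<Omega> Nfc) \<and>
           (v \<in> CA - {0} \<or> compatible TYPE('a) \<longrightarrow>
              \<not> S \<subseteq> Vz \<Omega> Nf \<and> \<not> S \<subseteq> Vz \<Omega> Nfc)"
    proof
      assume dCA: "d \<in> CA - {0}"
      obtain n e where c: "cad d n e" using ca_cad[of d] dCA by blast
      interpret cad d n e by (rule c)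
      have nofc: "\<And>I. I \<in> SA \<Longrightarrow> invol v + \<beta> *\<^sub>R (I * invol d) \<noteq> 0"
        using fc_zero_to_f_zero[OF b] nof by blast
      have e2: "S \<inter> Vz \<Omega> fc = {}" using nofc efc by (simp add: emptyV)
      have n1: "\<not> S \<subseteq> Vz \<Omega> Nf"
      proof
        assume "S \<subseteq> Vz \<Omega> Nf"
        then have "\<forall>I\<in>SA. (v * invol v - (\<beta> * \<beta>) *\<^sub>R (d * invol d)) + \<beta> *\<^sub>R (I * (v * invol d + d * invol v)) = 0"
          using eN by (simp add: subV)
        then have "(v * invol v - (\<beta> * \<beta>) *\<^sub>R (d * invol d)) = 0 \<and> (v * invol d + d * invol v) = 0"
          using all_SA_zero[OF J0 b] by blast
        then have "\<exists>I\<in>SA. v + \<beta> *\<^sub>R (I * d) = 0" using zero_from_NP[OF b] by simp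
        then show False using nof by blast
      qed
      have n2: "\<not> S \<subseteq> Vz \<Omega> Nfc"
      proof
        assume "S \<subseteq> Vz \<Omega> Nfc"
        then have "\<forall>I\<in>SA. (invol v * v - (\<beta> * \<beta>) *\<^sub>R (invol d * d)) + \<beta> *\<^sub>R (I * (invol v * d + invol d * v)) = 0"
          using eNc by (simp add: subV)
        then have h2: "(invol v * v - (\<beta> * \<beta>) *\<^sub>R (invol d * d)) = 0 \<and> (invol v * d + invol d * v) = 0"
          using all_SA_zero[OF J0 b] by blast
        interpret c2: cad "invol d" n "invol e" by (rule cad_conj[OF c])
        have "\<exists>I\<in>SA. invol v + \<beta> *\<^sub>R (I * invol d) = 0"
          using c2.zero_from_NP[OF b, of "invol v"] h2 by simp
        then show False using nofc by blast
      qed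
      show "S \<inter> Vz \<Omega> fc = {} \<and> \<not> (S \<subseteq> Vz \<Omega> Nf \<and> S \<subseteq> Vz \<Omega> Nfc) \<and>
           (v \<in> CA - {0} \<or> compatible TYPE('a) \<longrightarrow>
              \<not> S \<subseteq> Vz \<Omega> Nf \<and> \<not> S \<subseteq> Vz \<Omega> Nfc)" using e2 n1 n2 by simp
    qed
    show ?thesis using e1 ca by simp
  qed
qed

end


theorem theorem4p1:
  fixes D :: "complex set" and F :: "complex \<Rightarrow> 'a::alt_star_algebra \<times> 'a" and x :: 'a
  assumes A_fd: "fin_dim TYPE('a)"
    and D_ne: "D \<noteq> {}"
    and D_conj: "\<forall>z\<in>D. cnj z \<in> D"
    and SA_ne: "(SA :: 'a set) \<noteq> {}"
    and F_stem: "stem D F"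
    and x_in: "x \<in> OmegaD D"
  shows
    "let \<Omega> = (OmegaD D :: 'a set);
         f = slice_f D F; fc = slice_fc D F; Nf = slice_Nf D F; Nfc = slice_Nfc D F;
         Vf = Vz \<Omega> f; Vfc = Vz \<Omega> fc; VNf = Vz \<Omega> Nf; VNfc = Vz \<Omega> Nfc;
         Sx = sph x; d = sph_der f x; v = sph_val f x
     in (x \<notin> reals \<longrightarrow>
           \<comment> \<open>(1)\<close>
           (d = 0 \<longrightarrow>
              (Sx \<subseteq> Vf \<and> Sx \<subseteq> Vfc \<and> Sx \<subseteq> VNf \<and> Sx \<subseteq> VNfc) \<or>
              (Sx \<inter> Vf = {} \<and> Sx \<inter> Vfc = {} \<and>
                 ((Sx \<inter> VNf = {} \<and> Sx \<inter> VNfc = {}) \<or>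
                  (singular TYPE('a) \<and> (nz_null v \<or> nz_null (invol v)))))) \<and>
           \<comment> \<open>(2)\<close>
           (right_zero_divisor d \<longrightarrow>
              (Sx \<inter> Vf \<noteq> {} \<and>
               (\<forall>y \<in> Sx \<inter> Vf.
                  Sx \<inter> Vf = {y' \<in> Sx. (im_el y' - im_el y) * d = 0} \<and>
                  invol y \<notin> Vf \<and> invol y \<in> VNfc \<and>
                  (assoc d (invol d) y = 0 \<longleftrightarrow> Sx \<subseteq> VNfc) \<and>
                  (assoc d (invol d) y = 0 \<longleftrightarrow> y \<in> VNf) \<and>
                  (assoc d (invol d) y = 0 \<longrightarrow> (Sx \<subseteq> VNf \<longleftrightarrow> comm (nrm d) y = 0)))) \<or>
              Sx \<inter> Vf = {}) \<and>
           \<comment> \<open>(3)\<close>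
           (d \<noteq> 0 \<and> \<not> right_zero_divisor d \<longrightarrow>
              (\<exists>y. Sx \<inter> Vf = {y} \<and> invol y \<in> VNfc \<and>
                  (invertible d \<longrightarrow> y = re_el x - v * inv_el d) \<and>
                  (assoc d (invol d) y = 0 \<longleftrightarrow> Sx \<subseteq> VNfc) \<and>
                  (assoc d (invol d) y = 0 \<longleftrightarrow> y \<in> VNf) \<and>
                  (assoc d (invol d) y = 0 \<longrightarrow> (Sx \<subseteq> VNf \<longleftrightarrow> comm (nrm d) y = 0)) \<and>
                  (d \<in> CA - {0} \<longrightarrow>
                     Sx \<subseteq> VNf \<and> Sx \<subseteq> VNfc \<and>
                     Sx \<inter> Vfc = {(inv_el d * invol y) * d})) \<or>
              (Sx \<inter> Vf = {} \<and>
                 (d \<in> CA - {0} \<longrightarrow>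
                    Sx \<inter> Vfc = {} \<and> \<not> (Sx \<subseteq> VNf \<and> Sx \<subseteq> VNfc) \<and>
                    (v \<in> CA - {0} \<or> compatible TYPE('a) \<longrightarrow>
                       \<not> Sx \<subseteq> VNf \<and> \<not> Sx \<subseteq> VNfc))))) \<and>
        (x \<in> reals \<longrightarrow>
           (x \<in> Vf \<and> x \<in> Vfc \<and> x \<in> VNf \<and> x \<in> VNfc) \<or>
           (x \<notin> Vf \<and> x \<notin> Vfc \<and>
              ((x \<notin> VNf \<and> x \<notin> VNfc) \<or>
               (singular TYPE('a) \<and> (nz_null (f x) \<or> nz_null (invol (f x)))))))"
proof -
  obtain \<alpha> \<beta> J0 where J0: "J0 \<in> SA" and zD: "Complex \<alpha> \<beta> \<in> D" and xr: "x = rl \<alpha> + \<beta> *\<^sub>R J0"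
    using x_in unfolding OmegaD_def by blast
  define P where "P = fst (F (Complex \<alpha> \<beta>))"
  define Q where "Q = snd (F (Complex \<alpha> \<beta>))"
  have sF: "stem D F" by (rule F_stem)
  have sFc: "stem D (stem_conj F)" by (rule stem_conj_stem[OF sF])
  have sN: "stem D (stem_prod F (stem_conj F))" by (rule stem_prod_stem[OF sF sFc])
  have sNc: "stem D (stem_prod (stem_conj F) (stem_conj (stem_conj F)))"
    by (rule stem_prod_stem[OF sFc stem_conj_stem[OF sFc]])
  have evf: "I \<in> SA \<Longrightarrow> slice_f D F (rl \<alpha> + \<beta> *\<^sub>R I) = P + I * Q" for I
    using slice_eval[OF sF _ zD] unfolding slice_f_def P_def Q_def by blast
  have evfc: "I \<in> SA \<Longrightarrow> slice_fc D F (rl \<alpha> + \<beta> *\<^sub>R I) = invol P + I * invol Q" for I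
    using slice_eval[OF sFc _ zD] unfolding slice_fc_def P_def Q_def by (simp add: stem_conj_def cinvol_def)
  have evN: "I \<in> SA \<Longrightarrow> slice_Nf D F (rl \<alpha> + \<beta> *\<^sub>R I) = (P * invol P - Q * invol Q) + I * (P * invol Q + Q * invol P)" for I
    using slice_eval[OF sN _ zD] unfolding slice_Nf_def P_def Q_def by (simp add: stem_prod_def stem_conj_def cinvol_def cmul_def)
  have evNc: "I \<in> SA \<Longrightarrow> slice_Nfc D F (rl \<alpha> + \<beta> *\<^sub>R I) = (invol P * P - invol Q * Q) + I * (invol P * Q + invol Q * P)" for I
    using slice_eval[OF sNc _ zD] unfolding slice_Nfc_def P_def Q_def by (simp add: stem_prod_def stem_conj_def cinvol_def cmul_def)
  show ?thesis
  proof (cases "\<beta> = 0")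
    case True
    have xrl: "x = rl \<alpha>" using xr True by simp
    have xreal: "x \<in> reals" using xrl by (simp add: reals_def)
    have Q0: "Q = 0" using stem_real[OF sF] zD True unfolding Q_def by simp
    have fx: "slice_f D F x = P" using evf[OF J0] xr Q0 by simp
    have fcx: "slice_fc D F x = invol P" using evfc[OF J0] xr Q0 by simp
    have Nx: "slice_Nf D F x = P * invol P" using evN[OF J0] xr Q0 by simp
    have Ncx: "slice_Nfc D F x = invol P * P" using evNc[OF J0] xr Q0 by simp
    have rp: "(x \<in> Vz (OmegaD D) (slice_f D F) \<and> x \<in> Vz (OmegaD D) (slice_fc D F) \<and> x \<in> Vz (OmegaD D) (slice_Nf D F) \<and> x \<in> Vz (OmegaD D) (slice_Nfc D F)) \<or>
           (x \<notin> Vz (OmegaD D) (slice_f D F) \<and> x \<notin> Vz (OmegaD D) (slice_fc D F) \<and>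
              ((x \<notin> Vz (OmegaD D) (slice_Nf D F) \<and> x \<notin> Vz (OmegaD D) (slice_Nfc D F)) \<or>
               (singular TYPE('a) \<and> (nz_null (slice_f D F x) \<or> nz_null (invol (slice_f D F x))))))"
    proof (cases "P = 0")
      case True
      then show ?thesis using x_in fx fcx Nx Ncx by (simp add: Vz_def)
    next
      case False
      have iP: "invol P \<noteq> 0" using False by (metis invol_0 invol_invol)
      show ?thesis
      proof (cases "P * invol P = 0 \<or> invol P * P = 0")
        case True
        then have "nz_null P \<or> nz_null (invol P)" using False iP by (auto simp: nz_null_def nrm_def)
        moreover then have "singular TYPE('a)" unfolding singular_def nz_null_def by blast
        ultimately show ?thesis using fx fcx False iP by (simp add: Vz_def)
      next
        case F2: False
        then show ?thesis using fx fcx Nx Ncx False iP by (simp add: Vz_def)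
      qed
    qed
    show ?thesis unfolding Let_def
      apply (rule conjI)
       apply (rule impI)
      using xreal apply blast
      apply (rule impI)
      by (rule rp)
  next
    case False
    have bz: "\<beta> \<noteq> 0" by (rule False)
    have xnr: "x \<notin> reals"
    proof
      assume "x \<in> reals"
      then obtain r where "x = rl r" by (auto simp: reals_def)
      then have h: "\<beta> *\<^sub>R J0 = rl (r - \<alpha>)" using xr by (simp add: rl_def algebra_simps)
      have "J0 = (1/\<beta>) *\<^sub>R (\<beta> *\<^sub>R J0)" using bz by simp
      also have "\<dots> = (1/\<beta>) *\<^sub>R rl (r - \<alpha>)" using h by simp
      also have "\<dots> = rl ((r - \<alpha>) / \<beta>)" by (simp add: rl_def)
      finally have "J0 = rl ((r - \<alpha>) / \<beta>)" .
      then have "J0 * J0 = rl (((r - \<alpha>) / \<beta>) * ((r - \<alpha>) / \<beta>))" by (simp add: rl_def asa_scaleR_left asa_scaleR_right asa_one_left)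
      then have "rl (((r - \<alpha>) / \<beta>) * ((r - \<alpha>) / \<beta>)) = (rl (- 1) :: 'a)" using sa_sq[OF J0] by (simp add: rl_def)
      then have "((r - \<alpha>) / \<beta>) * ((r - \<alpha>) / \<beta>) = - 1" by (rule rl_inj)
      moreover have "((r - \<alpha>) / \<beta>) * ((r - \<alpha>) / \<beta>) \<ge> 0" by simp
      ultimately show False by simp
    qed
    define f where "f = slice_f D F"
    have fx: "f x = P + J0 * Q" using evf[OF J0] xr unfolding f_def by simp
    have fxi: "f (invol x) = P - J0 * Q" using evf[OF sa_neg[OF J0]] xr invol_pt[OF J0] unfolding f_def by simp
    have vP: "sph_val f x = P" using fx fxi by (simp add: sph_val_def scaleR_2[symmetric])
    have imx: "im_el x = \<beta> *\<^sub>R J0" using im_pt[OF J0] xr by simp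
    have iim: "inv_el (\<beta> *\<^sub>R J0) = - (1/\<beta>) *\<^sub>R J0"
    proof (rule inv_el_eq)
      show "(\<beta> *\<^sub>R J0) * (- (1/\<beta>) *\<^sub>R J0) = 1" using bz sa_sq[OF J0] by (simp add: asa_scaleR_left asa_scaleR_right)
      show "(- (1/\<beta>) *\<^sub>R J0) * (\<beta> *\<^sub>R J0) = 1" using bz sa_sq[OF J0] by (simp add: asa_scaleR_left asa_scaleR_right)
    qed
    have dQ: "sph_der f x = (1/\<beta>) *\<^sub>R Q"
    proof -
      have "f x - f (invol x) = J0 * Q + J0 * Q" using fx fxi by simp
      then have "sph_der f x = (1/2) *\<^sub>R ((- (1/\<beta>) *\<^sub>R J0) * (J0 * Q + J0 * Q))"
        unfolding sph_der_def imx iim by simp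
      also have "(- (1/\<beta>) *\<^sub>R J0) * (J0 * Q + J0 * Q) = (1/\<beta>) *\<^sub>R (Q + Q)"
        using sa_JJz[OF J0, of Q] by (simp add: asa_scaleR_left asa_distrib_right scaleR_add_right)
      also have "(1/2) *\<^sub>R ((1/\<beta>) *\<^sub>R (Q + Q)) = (1/\<beta>) *\<^sub>R Q" by (simp add: scaleR_2[symmetric])
      finally show ?thesis .
    qed
    define v where "v = sph_val f x"
    define d where "d = sph_der f x"
    have Qd: "Q = \<beta> *\<^sub>R d" using dQ bz unfolding d_def by simp
    have Pv: "P = v" using vP unfolding v_def by simp
    have Sx: "sph x = (\<lambda>I. rl \<alpha> + \<beta> *\<^sub>R I) ` SA"
    proof (rule set_eqI)
      fix y show "y \<in> sph x \<longleftrightarrow> y \<in> (\<lambda>I. rl \<alpha> + \<beta> *\<^sub>R I) ` SA"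
      proof
        assume "y \<in> sph x"
        then obtain \<alpha>' \<beta>' J I where J: "J \<in> SA" and I: "I \<in> SA" and xe: "x = rl \<alpha>' + \<beta>' *\<^sub>R J"
          and ye: "y = rl \<alpha>' + \<beta>' *\<^sub>R I" unfolding sph_def by blast
        have "rl \<alpha> + \<beta> *\<^sub>R J0 = rl \<alpha>' + \<beta>' *\<^sub>R J" using xr xe by simp
        from rep_alpha[OF J0 J this] have a: "\<alpha>' = \<alpha>" and bb: "\<beta>' *\<^sub>R J = \<beta> *\<^sub>R J0" by auto
        from rep_beta[OF J0 J bb] bz consider "\<beta>' = \<beta>" | "\<beta>' = - \<beta>" by blast
        then show "y \<in> (\<lambda>I. rl \<alpha> + \<beta> *\<^sub>R I) ` SA"
        proof cases
          case 1 then show ?thesis using ye a I by blast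
        next
          case 2
          then have "y = rl \<alpha> + \<beta> *\<^sub>R (- I)" using ye a by simp
          then show ?thesis using sa_neg[OF I] by blast
        qed
      next
        assume "y \<in> (\<lambda>I. rl \<alpha> + \<beta> *\<^sub>R I) ` SA"
        then obtain I where I: "I \<in> SA" and ye: "y = rl \<alpha> + \<beta> *\<^sub>R I" by blast
        show "y \<in> sph x" unfolding sph_def using J0 I xr ye by blast
      qed
    qed
    have S\<Omega>: "sph x \<subseteq> OmegaD D" unfolding Sx OmegaD_def using zD by blast
    interpret n: nr \<alpha> \<beta> J0 v d x f "slice_fc D F" "slice_Nf D F" "slice_Nfc D F" "OmegaD D" "sph x"
    proof
      show "\<beta> \<noteq> 0" by (rule bz)
      show "J0 \<in> SA" by (rule J0)
      show "sph x = (\<lambda>I. rl \<alpha> + \<beta> *\<^sub>R I) ` SA" by (rule Sx)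
      show "sph x \<subseteq> OmegaD D" by (rule S\<Omega>)
      show "f (rl \<alpha> + \<beta> *\<^sub>R I) = v + \<beta> *\<^sub>R (I * d)" if "I \<in> SA" for I
        using evf[OF that] Qd Pv unfolding f_def by (simp add: asa_scaleR_right)
      show "slice_fc D F (rl \<alpha> + \<beta> *\<^sub>R I) = invol v + \<beta> *\<^sub>R (I * invol d)" if "I \<in> SA" for I
        using evfc[OF that] Qd Pv by (simp add: asa_scaleR_right)
      show "slice_Nf D F (rl \<alpha> + \<beta> *\<^sub>R I) = (v * invol v - (\<beta> * \<beta>) *\<^sub>R (d * invol d)) + \<beta> *\<^sub>R (I * (v * invol d + d * invol v))" if "I \<in> SA" for I
        using evN[OF that] Qd Pv by (simp add: asa_scaleR_right asa_scaleR_left asa_distrib_right scaleR_add_right)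
      show "slice_Nfc D F (rl \<alpha> + \<beta> *\<^sub>R I) = (invol v * v - (\<beta> * \<beta>) *\<^sub>R (invol d * d)) + \<beta> *\<^sub>R (I * (invol v * d + invol d * v))" if "I \<in> SA" for I
        using evNc[OF that] Qd Pv by (simp add: asa_scaleR_right asa_scaleR_left asa_distrib_right scaleR_add_right)
      show "re_el x = rl \<alpha>" using re_pt[OF J0] xr by simp
    qed
    note P1 = n.part1[unfolded v_def d_def f_def]
    note P2 = n.part2[unfolded v_def d_def f_def]
    note P3 = n.part3[unfolded v_def d_def f_def]
    show ?thesis unfolding Let_def
      apply (rule conjI)
       apply (rule impI)
       apply (rule conjI[OF P1 conjI[OF P2 P3]])
      apply (rule impI)
      using xnr by blast
  qed
qed


end
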